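(* Under the hypotheses of Theorem 2.1.1 (namely: $K\subset\mathbb{C}$ a number field, $\xi\in K$, $s\in\mathbb{Q}_{<0}$, $F\in K[[z]]$ a holonomic Gevrey series of order $s$ of arithmetic type whose associated entire function vanishes at $\sigma(\xi)$ for every embedding $\sigma:K\to\mathbb{C}$), the power series $G\in K[[z]]$ defined by $(z-\xi)G=F$ is a holonomic Gevrey series of order $s$ of arithmetic type.
   Context: Let $K\subset\mathbb{C}$ be a number field. A sequence $(a_n)_{n\ge0}$ in $K$ satisfies condition (G) if there is $C>0$ such that for all $n$: every conjugate of $a_n$ has absolute value $\le C^n$, and there is a positive integer $d_n\le C^n$ with $d_na_0,\dots,d_na_n$ algebraic integers. For $s=p/q\in\mathbb{Q}$ ($q\ge1$, $\gcd(p,q)=1$), $F\in K[[z]]$ is a Gevrey series of order $s$ of arithmetic type if $F=\sum_{n\ge0}(\lfloor n/q\rfloor!)^{p}a_nz^n$ with $(a_n)$ satisfying (G); it is holonomic if annihilated by a nonzero element of $K[z,\frac{d}{dz}]$. *)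

theory Defs
  imports "HOL-Analysis.Analysis" "HOL-Computational_Algebra.Computational_Algebra"
begin

definition number_field :: "complex set \<Rightarrow> bool" where
  "number_field K \<longleftrightarrow>
     0 \<in> K \<and> 1 \<in> K \<and>
     (\<forall>x\<in>K. \<forall>y\<in>K. x + y \<in> K \<and> x * y \<in> K \<and> - x \<in> K) \<and>
     (\<forall>x\<in>K. x \<noteq> 0 \<longrightarrow> inverse x \<in> K) \<and>
     (\<exists>B. finite B \<and> B \<subseteq> K \<and>
        (\<forall>x\<in>K. \<exists>r :: complex \<Rightarrow> rat. x = (\<Sum>b\<in>B. of_rat (r b) * b)))"

text \<open>Field embeddings of K into the complex numbers (only the values on K matter).\<close>
definition embedding :: "complex set \<Rightarrow> (complex \<Rightarrow> complex) \<Rightarrow> bool" where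
  "embedding K \<sigma> \<longleftrightarrow> \<sigma> 1 = 1 \<and>
     (\<forall>x\<in>K. \<forall>y\<in>K. \<sigma> (x + y) = \<sigma> x + \<sigma> y \<and> \<sigma> (x * y) = \<sigma> x * \<sigma> y)"

definition algebraic_integer :: "complex \<Rightarrow> bool" where
  "algebraic_integer x \<longleftrightarrow>
     (\<exists>p :: int poly. lead_coeff p = 1 \<and> poly (map_poly of_int p) x = 0)"

definition condG :: "complex set \<Rightarrow> (nat \<Rightarrow> complex) \<Rightarrow> bool" where
  "condG K a \<longleftrightarrow> (\<forall>n. a n \<in> K) \<and>
     (\<exists>C :: real. C > 0 \<and> (\<forall>n.
        (\<forall>\<sigma>. embedding K \<sigma> \<longrightarrow> norm (\<sigma> (a n)) \<le> C ^ (n + 1)) \<and>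
        (\<exists>d :: nat. d > 0 \<and> real d \<le> C ^ (n + 1) \<and>
            (\<forall>k\<le>n. algebraic_integer (of_nat d * a k)))))"

definition gevrey_arith :: "complex set \<Rightarrow> rat \<Rightarrow> complex fps \<Rightarrow> bool" where
  "gevrey_arith K s F \<longleftrightarrow>
     (case quotient_of s of (p, q) \<Rightarrow>
        (\<exists>a. condG K a \<and>
           (\<forall>n. fps_nth F n = (fact (n div nat q) powi p) * a n)))"

text \<open>Holonomic: annihilated by a nonzero element of K[z, d/dz], written in the
  normal-ordered basis z^i (d/dz)^j.\<close>
definition holonomic :: "complex set \<Rightarrow> complex fps \<Rightarrow> bool" where
  "holonomic K F \<longleftrightarrow>
     (\<exists>m :: nat. \<exists>c :: nat \<Rightarrow> nat \<Rightarrow> complex.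
        (\<forall>i\<le>m. \<forall>j\<le>m. c i j \<in> K) \<and> (\<exists>i\<le>m. \<exists>j\<le>m. c i j \<noteq> 0) \<and>
        (\<Sum>i\<le>m. \<Sum>j\<le>m. fps_const (c i j) * fps_X ^ i * (fps_deriv ^^ j) F) = 0)"

end

theory Submission
  imports Defs "Jordan_Normal_Form.Char_Poly"
begin


lemma eigen_alg_int:
  fixes A :: "int mat" and v :: "complex vec"
  assumes A: "A \<in> carrier_mat n n" and v: "v \<in> carrier_vec n" "v \<noteq> 0\<^sub>v n"
    and ev: "map_mat of_int A *\<^sub>v v = z \<cdot>\<^sub>v v"
  shows "algebraic_integer z"
proof -
  have A': "map_mat (of_int :: int \<Rightarrow> complex) A \<in> carrier_mat n n" using A by simp
  have "eigenvalue (map_mat of_int A) z"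
    unfolding eigenvalue_def eigenvector_def using A' v ev by auto
  hence "poly (char_poly (map_mat of_int A)) z = 0" using eigenvalue_root_char_poly[OF A'] by simp
  moreover have "char_poly (map_mat (of_int::int\<Rightarrow>complex) A) = map_poly of_int (char_poly A)"
    by (rule of_int_hom.char_poly_hom[OF A])
  ultimately have "poly (map_poly of_int (char_poly A)) z = 0" by simp
  moreover have "lead_coeff (char_poly A) = 1" using degree_monic_char_poly[OF A] by simp
  ultimately show ?thesis unfolding algebraic_integer_def by blast
qed

definition acts :: "complex \<Rightarrow> 'i set \<Rightarrow> ('i \<Rightarrow> complex) \<Rightarrow> bool" where
  "acts z I w \<longleftrightarrow> (\<exists>M :: 'i \<Rightarrow> 'i \<Rightarrow> int. \<forall>i\<in>I. z * w i = (\<Sum>j\<in>I. of_int (M i j) * w j))"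

lemma acts_alg_int:
  assumes "finite I" "i0 \<in> I" "w i0 \<noteq> 0" "acts z I w"
  shows "algebraic_integer z"
proof -
  obtain M where M: "\<And>i. i\<in>I \<Longrightarrow> z * w i = (\<Sum>j\<in>I. of_int (M i j) * w j)"
    using assms(4) unfolding acts_def by blast
  define n where "n = card I"
  obtain h where h: "bij_betw h {0..<n} I" using ex_bij_betw_nat_finite[OF assms(1)] n_def by blast
  define A where "A = mat n n (\<lambda>(i,j). M (h i) (h j))"
  define v where "v = vec n (\<lambda>i. w (h i))"
  have A: "A \<in> carrier_mat n n" by (simp add: A_def)
  have v: "v \<in> carrier_vec n" by (simp add: v_def)
  have "v \<noteq> 0\<^sub>v n"
  proof
    assume v0: "v = 0\<^sub>v n"
    obtain k where k: "k < n" "h k = i0" using h assms(2)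
      by (metis atLeastLessThan_iff bij_betw_iff_bijections)
    then have "v $ k = w i0" by (simp add: v_def)
    with v0 k assms(3) show False by simp
  qed
  moreover have "map_mat of_int A *\<^sub>v v = z \<cdot>\<^sub>v v"
  proof (rule eq_vecI)
    fix i assume i: "i < dim_vec (z \<cdot>\<^sub>v v)"
    hence i: "i < n" by (simp add: v_def)
    have hi: "h i \<in> I" using h i by (auto simp: bij_betw_def)
    have "(map_mat of_int A *\<^sub>v v) $ i = (\<Sum>j\<in>{0..<n}. of_int (M (h i) (h j)) * w (h j))"
      using i by (simp add: A_def v_def mult_mat_vec_def scalar_prod_def)
    also have "\<dots> = (\<Sum>j\<in>I. of_int (M (h i) j) * w j)"
      using sum.reindex_bij_betw[OF h, of "\<lambda>j. of_int (M (h i) j) * w j"] by simp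
    also have "\<dots> = z * w (h i)" using M[OF hi] by simp
    also have "\<dots> = (z \<cdot>\<^sub>v v) $ i" using i by (simp add: v_def)
    finally show "(map_mat of_int A *\<^sub>v v) $ i = (z \<cdot>\<^sub>v v) $ i" .
  qed (simp add: A_def v_def)
  ultimately show ?thesis using eigen_alg_int[OF A v] by blast
qed

lemma alg_int_acts:
  assumes "algebraic_integer x"
  shows "\<exists>(n::nat) (w::nat \<Rightarrow> complex). n > 0 \<and> w 0 = 1 \<and> acts x {..<n} w"
proof -
  obtain p :: "int poly" where p: "lead_coeff p = 1" "poly (map_poly of_int p) x = 0"
    using assms algebraic_integer_def by blast
  define n where "n = degree p"
  have n: "n > 0"
  proof (rule ccontr)
    assume "\<not> n > 0"
    then have "degree p = 0" by (simp add: n_def)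
    then have "p = [:1:]" using p(1) by (metis leading_coeff_0_iff one_pCons pCons_0_0 degree_0_id)
    then show False using p(2) by simp
  qed
  have px: "(\<Sum>j\<le>n. of_int (coeff p j) * x ^ j) = 0"
    using p(2) unfolding n_def by (simp add: poly_altdef degree_map_poly)
  have xn: "x ^ n = - (\<Sum>j<n. of_int (coeff p j) * x ^ j)"
  proof -
    have "(\<Sum>j\<le>n. of_int (coeff p j) * x ^ j) = (\<Sum>j<n. of_int (coeff p j) * x ^ j) + x ^ n"
      using p(1) by (simp add: lessThan_Suc_atMost[symmetric] n_def)
    with px show ?thesis by (simp add: eq_neg_iff_add_eq_0 add.commute)
  qed
  define M where "M i j = (if i + 1 < n then (if j = i+1 then 1 else 0) else - coeff p j)" for i j :: nat
  have "acts x {..<n} (\<lambda>i. x ^ i)"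
    unfolding acts_def
  proof (intro exI[of _ M] ballI)
    fix i assume i: "i \<in> {..<n}"
    show "x * x ^ i = (\<Sum>j\<in>{..<n}. of_int (M i j) * x ^ j)"
    proof (cases "i + 1 < n")
      case True
      then have "(\<Sum>j\<in>{..<n}. of_int (M i j) * x ^ j) = (\<Sum>j\<in>{..<n}. if j = i + 1 then x ^ j else 0)"
        by (intro sum.cong) (auto simp: M_def)
      also have "\<dots> = x ^ (i+1)" using True by (simp add: sum.delta)
      finally show ?thesis by simp
    next
      case False
      then have i': "i + 1 = n" using i by simp
      have "(\<Sum>j\<in>{..<n}. of_int (M i j) * x ^ j) = - (\<Sum>j<n. of_int (coeff p j) * x ^ j)"
        using False by (simp add: M_def sum_negf)
      also have "\<dots> = x ^ n" using xn by simp
      finally have S: "(\<Sum>j\<in>{..<n}. of_int (M i j) * x ^ j) = x ^ n" .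
      have "x * x ^ i = x ^ n" unfolding i'[symmetric] by simp
      then show ?thesis using S by simp
    qed
  qed
  then have "0 < n \<and> (\<lambda>i. x^i) 0 = 1 \<and> acts x {..<n} (\<lambda>i. x^i)" using n by simp
  then show ?thesis by blast
qed

lemma acts_add: "acts x I w \<Longrightarrow> acts y I w \<Longrightarrow> acts (x + y) I w"
  unfolding acts_def
proof (elim exE)
  fix M1 M2 assume 1: "\<forall>i\<in>I. x * w i = (\<Sum>j\<in>I. of_int (M1 i j) * w j)"
    and 2: "\<forall>i\<in>I. y * w i = (\<Sum>j\<in>I. of_int (M2 i j) * w j)"
  show "\<exists>M. \<forall>i\<in>I. (x + y) * w i = (\<Sum>j\<in>I. of_int (M i j) * w j)"
    by (rule exI[of _ "\<lambda>i j. M1 i j + M2 i j"]) (simp add: 1 2 distrib_right sum.distrib)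
qed

lemma acts_mult: assumes "acts x I w" "acts y I w" shows "acts (x * y) I w"
proof -
  obtain M1 where 1: "\<forall>i\<in>I. x * w i = (\<Sum>j\<in>I. of_int (M1 i j) * w j)" using assms(1) unfolding acts_def by blast
  obtain M2 where 2: "\<forall>i\<in>I. y * w i = (\<Sum>j\<in>I. of_int (M2 i j) * w j)" using assms(2) unfolding acts_def by blast
  show ?thesis unfolding acts_def
  proof (intro exI[of _ "\<lambda>i k. \<Sum>j\<in>I. M2 i j * M1 j k"] ballI)
    fix i assume i: "i \<in> I"
    have "x * y * w i = (\<Sum>j\<in>I. of_int (M2 i j) * (x * w j))"
      using 2 i by (simp add: sum_distrib_left mult_ac)
    also have "\<dots> = (\<Sum>j\<in>I. \<Sum>k\<in>I. of_int (M2 i j) * of_int (M1 j k) * w k)"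
      using 1 by (simp add: sum_distrib_left mult_ac)
    also have "\<dots> = (\<Sum>k\<in>I. \<Sum>j\<in>I. of_int (M2 i j) * of_int (M1 j k) * w k)"
      by (rule sum.swap)
    also have "\<dots> = (\<Sum>k\<in>I. of_int (\<Sum>j\<in>I. M2 i j * M1 j k) * w k)"
      by (simp add: sum_distrib_right)
    finally show "x * y * w i = (\<Sum>k\<in>I. of_int (\<Sum>j\<in>I. M2 i j * M1 j k) * w k)" .
  qed
qed

lemma acts_left:
  assumes "acts x I w1" "finite I2"
  shows "acts x (I \<times> I2) (\<lambda>(i,j). w1 i * w2 j)"
proof -
  obtain M1 where 1: "\<forall>i\<in>I. x * w1 i = (\<Sum>j\<in>I. of_int (M1 i j) * w1 j)" using assms(1) unfolding acts_def by blast
  show ?thesis unfolding acts_def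
  proof (intro exI[of _ "\<lambda>(i,j) (i',j'). if j' = j then M1 i i' else 0"] ballI)
    fix ij assume ij: "ij \<in> I \<times> I2"
    obtain i j where e: "ij = (i,j)" and i: "i \<in> I" and j: "j \<in> I2" using ij by auto
    have "(\<Sum>ij'\<in>I \<times> I2. of_int ((case ij of (i, j) \<Rightarrow> \<lambda>(i', j'). if j' = j then M1 i i' else 0) ij') *
              (case ij' of (i, j) \<Rightarrow> w1 i * w2 j))
        = (\<Sum>i'\<in>I. \<Sum>j'\<in>I2. of_int (if j' = j then M1 i i' else 0) * (w1 i' * w2 j'))"
      unfolding e by (simp add: sum.cartesian_product case_prod_unfold) (simp only: prod.sel)
    also have "\<dots> = (\<Sum>i'\<in>I. \<Sum>j'\<in>I2. if j' = j then of_int (M1 i i') * (w1 i' * w2 j') else 0)"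
      by (intro sum.cong refl) auto
    also have "\<dots> = (\<Sum>i'\<in>I. of_int (M1 i i') * (w1 i' * w2 j))"
      using j assms(2) by (simp add: sum.delta)
    also have "\<dots> = (\<Sum>i'\<in>I. of_int (M1 i i') * w1 i') * w2 j" by (subst sum_distrib_right) (simp add: mult_ac)
    also have "\<dots> = x * w1 i * w2 j" using 1 i by simp
    finally show "x * (case ij of (i, j) \<Rightarrow> w1 i * w2 j) = (\<Sum>ij'\<in>I \<times> I2. of_int ((case ij of (i, j) \<Rightarrow> \<lambda>(i', j'). if j' = j then M1 i i' else 0) ij') *
              (case ij' of (i, j) \<Rightarrow> w1 i * w2 j))" using e by (simp add: mult_ac)
  qed
qed

lemma acts_right:
  assumes "acts y I2 w2" "finite I"
  shows "acts y (I \<times> I2) (\<lambda>(i,j). w1 i * w2 j)"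
proof -
  obtain M2 where 2: "\<forall>i\<in>I2. y * w2 i = (\<Sum>j\<in>I2. of_int (M2 i j) * w2 j)" using assms(1) unfolding acts_def by blast
  show ?thesis unfolding acts_def
  proof (intro exI[of _ "\<lambda>(i,j) (i',j'). if i' = i then M2 j j' else 0"] ballI)
    fix ij assume ij: "ij \<in> I \<times> I2"
    obtain i j where e: "ij = (i,j)" and i: "i \<in> I" and j: "j \<in> I2" using ij by auto
    have "(\<Sum>ij'\<in>I \<times> I2. of_int ((case ij of (i, j) \<Rightarrow> \<lambda>(i', j'). if i' = i then M2 j j' else 0) ij') *
              (case ij' of (i, j) \<Rightarrow> w1 i * w2 j))
        = (\<Sum>i'\<in>I. \<Sum>j'\<in>I2. of_int (if i' = i then M2 j j' else 0) * (w1 i' * w2 j'))"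
      unfolding e by (simp add: sum.cartesian_product case_prod_unfold) (simp only: prod.sel)
    also have "\<dots> = (\<Sum>i'\<in>I. if i' = i then (\<Sum>j'\<in>I2. of_int (M2 j j') * (w1 i' * w2 j')) else 0)"
      by (intro sum.cong) auto
    also have "\<dots> = (\<Sum>j'\<in>I2. of_int (M2 j j') * (w1 i * w2 j'))"
      using i assms(2) by (simp add: sum.delta')
    also have "\<dots> = w1 i * (\<Sum>j'\<in>I2. of_int (M2 j j') * w2 j')" by (subst sum_distrib_left) (simp add: mult_ac)
    also have "\<dots> = w1 i * (y * w2 j)" using 2 j by simp
    also have "\<dots> = y * w1 i * w2 j" by (simp add: mult_ac)
    finally show "y * (case ij of (i, j) \<Rightarrow> w1 i * w2 j) = (\<Sum>ij'\<in>I \<times> I2. of_int ((case ij of (i, j) \<Rightarrow> \<lambda>(i', j'). if i' = i then M2 j j' else 0) ij') *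
              (case ij' of (i, j) \<Rightarrow> w1 i * w2 j))" using e by (simp add: mult_ac)
  qed
qed

lemma alg_int_add_mult:
  assumes "algebraic_integer x" "algebraic_integer y"
  shows "algebraic_integer (x + y)" "algebraic_integer (x * y)"
proof -
  obtain n1 :: nat and w1 :: "nat \<Rightarrow> complex" where 1: "n1 > 0" "w1 0 = 1" "acts x {..<n1} w1" using alg_int_acts[OF assms(1)] by blast
  obtain n2 :: nat and w2 :: "nat \<Rightarrow> complex" where 2: "n2 > 0" "w2 0 = 1" "acts y {..<n2} w2" using alg_int_acts[OF assms(2)] by blast
  define W where "W = (\<lambda>(i,j). w1 i * w2 j)"
  have ax: "acts x ({..<n1} \<times> {..<n2}) W" unfolding W_def by (rule acts_left[OF 1(3)]) simp
  have ay: "acts y ({..<n1} \<times> {..<n2}) W" unfolding W_def by (rule acts_right[OF 2(3)]) simp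
  have fin: "finite ({..<n1} \<times> {..<n2})" by simp
  have mem: "(0,0) \<in> {..<n1} \<times> {..<n2}" using 1 2 by simp
  have W0: "W (0,0) \<noteq> 0" using 1 2 by (simp add: W_def)
  show "algebraic_integer (x + y)" by (rule acts_alg_int[OF fin mem W0 acts_add[OF ax ay]])
  show "algebraic_integer (x * y)" by (rule acts_alg_int[OF fin mem W0 acts_mult[OF ax ay]])
qed

lemma alg_int_add: "algebraic_integer x \<Longrightarrow> algebraic_integer y \<Longrightarrow> algebraic_integer (x + y)"
  using alg_int_add_mult by blast
lemma alg_int_mult: "algebraic_integer x \<Longrightarrow> algebraic_integer y \<Longrightarrow> algebraic_integer (x * y)"
  using alg_int_add_mult by blast

lemma alg_int_of_int: "algebraic_integer (of_int c)"
proof -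
  have "acts (of_int c) {0::nat} (\<lambda>_. 1)" unfolding acts_def by (rule exI[of _ "\<lambda>_ _. c"]) simp
  then show ?thesis using acts_alg_int[of "{0::nat}" 0 "\<lambda>_. 1" "of_int c"] by simp
qed

lemma alg_int_of_nat: "algebraic_integer (of_nat c)"
  using alg_int_of_int[of "int c"] by simp

lemma alg_int_sum: "finite A \<Longrightarrow> (\<And>i. i \<in> A \<Longrightarrow> algebraic_integer (f i)) \<Longrightarrow> algebraic_integer (\<Sum>i\<in>A. f i)"
  by (induction A rule: finite_induct) (auto intro: alg_int_add alg_int_of_int[of 0, simplified])

lemma alg_int_power: "algebraic_integer x \<Longrightarrow> algebraic_integer (x ^ n)"
  by (induction n) (auto intro: alg_int_mult alg_int_of_int[of 1, simplified])


lemma Suc_div_eq_if: "Suc N div d = N div d + (if d dvd Suc N then 1 else 0)" for d N :: nat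
  by (cases "d = 0") (auto simp: div_Suc dvd_eq_mod_eq_0)

lemma multiplicity_card:
  fixes p m M :: nat
  assumes p: "prime p" and m: "m > 0" and M: "m \<le> M"
  shows "card {j\<in>{1..M}. p ^ j dvd m} = multiplicity p m"
proof -
  have nu: "\<not> is_unit p" using p by (simp add: prime_nat_iff)
  have p2: "p \<ge> 2" using p by (simp add: prime_ge_2_nat)
  have "p ^ multiplicity p m dvd m" by (rule multiplicity_dvd)
  then have "p ^ multiplicity p m \<le> m" using m by (simp add: dvd_imp_le)
  moreover have "multiplicity p m < 2 ^ multiplicity p m" by (rule less_exp)
  moreover have "(2::nat) ^ multiplicity p m \<le> p ^ multiplicity p m" using p2 by (simp add: power_mono)
  ultimately have le: "multiplicity p m \<le> M" using M by linarith
  have iff: "p ^ j dvd m \<longleftrightarrow> j \<le> multiplicity p m" for j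
    using power_dvd_iff_le_multiplicity[of m p j] m nu by simp
  have "{j\<in>{1..M}. p ^ j dvd m} = {1..multiplicity p m}"
    using le by (auto simp: iff)
  then show ?thesis by simp
qed

lemma legendre:
  fixes p N M :: nat
  assumes p: "prime p" and M: "N \<le> M"
  shows "multiplicity p (fact N :: nat) = (\<Sum>j\<in>{1..M}. N div p ^ j)"
  using M
proof (induction N)
  case 0
  then show ?case by (simp add: multiplicity_one)
next
  case (Suc N)
  have "multiplicity p (fact (Suc N) :: nat) = multiplicity p (Suc N * fact N)" by simp
  also have "\<dots> = multiplicity p (Suc N) + multiplicity p (fact N :: nat)"
    using p by (intro prime_elem_multiplicity_mult_distrib) auto
  also have "multiplicity p (fact N :: nat) = (\<Sum>j\<in>{1..M}. N div p ^ j)" using Suc by simp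
  also have "multiplicity p (Suc N) = card {j\<in>{1..M}. p ^ j dvd Suc N}"
    using multiplicity_card[OF p, of "Suc N" M] Suc.prems by simp
  also have "card {j\<in>{1..M}. p ^ j dvd Suc N} = (\<Sum>j\<in>{1..M}. if p ^ j dvd Suc N then 1 else 0)"
    by (simp add: sum.If_cases Int_def)
  also have "\<dots> + (\<Sum>j\<in>{1..M}. N div p ^ j) = (\<Sum>j\<in>{1..M}. Suc N div p ^ j)"
    by (simp add: Suc_div_eq_if sum.distrib add.commute)
  finally show ?case .
qed

lemma prime_dvd_central_binomial:
  fixes p n e :: nat
  assumes p: "prime p" and lo: "n < p ^ e" and hi: "p ^ e \<le> 2 * n"
  shows "p dvd (2 * n choose n)"
proof -
  have p2: "p \<ge> 2" using p by (simp add: prime_ge_2_nat)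
  have n1: "n \<ge> 1" using lo hi by linarith
  have e1: "e \<ge> 1" using lo n1 by (cases e) auto
  have "e < 2 ^ e" by (rule less_exp)
  also have "(2::nat) ^ e \<le> p ^ e" using p2 by (simp add: power_mono)
  finally have e2: "e \<le> 2 * n" using hi by linarith
  have C0: "(2 * n choose n) \<noteq> 0" by simp
  have ff: "fact n * fact n * (2 * n choose n) = (fact (2 * n) :: nat)"
    using binomial_fact_lemma[of n "2*n"] by simp
  have "multiplicity p (fact (2 * n) :: nat) = multiplicity p (fact n * fact n :: nat) + multiplicity p (2 * n choose n)"
    using p C0 by (simp add: ff[symmetric] prime_elem_multiplicity_mult_distrib)
  also have "multiplicity p (fact n * fact n :: nat) = 2 * multiplicity p (fact n :: nat)"
    using p by (simp add: prime_elem_multiplicity_mult_distrib)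
  finally have eq: "multiplicity p (fact (2 * n) :: nat) = 2 * multiplicity p (fact n :: nat) + multiplicity p (2 * n choose n)" .
  have A: "multiplicity p (fact (2 * n) :: nat) = (\<Sum>j\<in>{1..2*n}. 2 * n div p ^ j)"
    by (rule legendre[OF p]) simp
  have B: "multiplicity p (fact n :: nat) = (\<Sum>j\<in>{1..2*n}. n div p ^ j)"
    by (rule legendre[OF p]) simp
  have eA: "e \<in> {1..2*n}" using e1 e2 by simp
  have X1: "(\<Sum>j\<in>{1..2*n}. 2 * n div p ^ j) = 2 * n div p ^ e + (\<Sum>j\<in>{1..2*n} - {e}. 2 * n div p ^ j)"
    using eA by (simp add: sum.remove)
  have X2: "2 * n div p ^ e = 1" using lo hi by (simp add: div_nat_eqI)
  have X3: "n div p ^ e = 0" using lo by simp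
  have X4: "(\<Sum>j\<in>{1..2*n}. 2 * (n div p ^ j)) = 2 * (n div p ^ e) + (\<Sum>j\<in>{1..2*n} - {e}. 2 * (n div p ^ j))"
    using eA by (simp add: sum.remove)
  have X5: "(\<Sum>j\<in>{1..2*n} - {e}. 2 * (n div p ^ j)) \<le> (\<Sum>j\<in>{1..2*n} - {e}. 2 * n div p ^ j)"
  proof (rule sum_mono)
    fix j show "2 * (n div p ^ j) \<le> 2 * n div p ^ j"
      using div_add1_eq[of n n "p ^ j"] by (simp add: mult_2)
  qed
  have X6: "2 * (\<Sum>j\<in>{1..2*n}. n div p ^ j) = (\<Sum>j\<in>{1..2*n}. 2 * (n div p ^ j))"
    by (rule sum_distrib_left)
  have "(\<Sum>j\<in>{1..2*n}. 2 * n div p ^ j) \<ge> 1 + 2 * (\<Sum>j\<in>{1..2*n}. n div p ^ j)"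
    using X1 X2 X3 X4 X5 X6 by linarith
  then have "multiplicity p (2 * n choose n) \<ge> 1" using eq A B by linarith
  then show ?thesis using prime_multiplicity_gt_zero_iff[of p "2 * n choose n"] p C0 by simp
qed

definition lcmupto :: "nat \<Rightarrow> nat" where "lcmupto N = Lcm {1..N}"

lemma lcmupto_pos: "lcmupto N > 0"
proof -
  have "Lcm {1..N} \<noteq> (0::nat)" using Lcm_0_iff_nat[of "{1..N}"] by simp
  then show ?thesis unfolding lcmupto_def by (simp only: neq0_conv)
qed

lemma dvd_lcmupto: "1 \<le> m \<Longrightarrow> m \<le> N \<Longrightarrow> m dvd lcmupto N"
  unfolding lcmupto_def by (rule dvd_Lcm) simp

lemma lcmupto_least: "(\<And>m. 1 \<le> m \<Longrightarrow> m \<le> N \<Longrightarrow> m dvd X) \<Longrightarrow> lcmupto N dvd X"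
  unfolding lcmupto_def by (rule Lcm_least) auto

lemma lcmupto_mono: "N \<le> M \<Longrightarrow> lcmupto N \<le> lcmupto M"
proof -
  assume "N \<le> M"
  then have "lcmupto N dvd lcmupto M" by (intro lcmupto_least dvd_lcmupto) auto
  then show ?thesis using lcmupto_pos[of M] by (intro dvd_imp_le) auto
qed

lemma dvd_lcm_binom:
  fixes m n :: nat
  assumes m: "1 \<le> m" "m \<le> 2 * n"
  shows "m dvd lcmupto n * (2 * n choose n)"
proof (rule multiplicity_le_imp_dvd)
  show "m \<noteq> 0" using m by simp
next
  fix p :: nat assume p: "prime p"
  have nu: "\<not> is_unit p" using p by (simp add: prime_nat_iff)
  have p2: "p \<ge> 2" using p by (simp add: prime_ge_2_nat)
  define e where "e = multiplicity p m"
  have L0: "lcmupto n \<noteq> 0" using lcmupto_pos[of n] by simp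
  have C0: "(2 * n choose n) \<noteq> 0" by simp
  have mult: "multiplicity p (lcmupto n * (2 * n choose n)) = multiplicity p (lcmupto n) + multiplicity p (2 * n choose n)"
    using p L0 C0 by (simp add: prime_elem_multiplicity_mult_distrib)
  show "multiplicity p m \<le> multiplicity p (lcmupto n * (2 * n choose n))"
  proof (cases "e = 0")
    case True then show ?thesis by (simp add: e_def)
  next
    case False
    have "p ^ e dvd m" unfolding e_def by (rule multiplicity_dvd)
    then have pe: "p ^ e \<le> 2 * n" using m dvd_imp_le[of "p^e" m] by simp
    show ?thesis
    proof (cases "p ^ e \<le> n")
      case True
      have "p ^ e dvd lcmupto n" using True p2 by (intro dvd_lcmupto) simp_all
      then have "e \<le> multiplicity p (lcmupto n)" using power_dvd_iff_le_multiplicity[OF L0 nu] by simp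
      then show ?thesis using mult e_def by simp
    next
      case False2: False
      have "p ^ e = p * p ^ (e - 1)" using False by (cases e) auto
      then have "2 * p ^ (e - 1) \<le> p ^ e" using p2 by simp
      then have "p ^ (e - 1) \<le> n" using pe by linarith
      then have "p ^ (e - 1) dvd lcmupto n" using p2 by (intro dvd_lcmupto) simp_all
      then have 1: "e - 1 \<le> multiplicity p (lcmupto n)" using power_dvd_iff_le_multiplicity[OF L0 nu] by simp
      have "p dvd (2 * n choose n)" using prime_dvd_central_binomial[OF p _ pe] False2 by simp
      then have 2: "1 \<le> multiplicity p (2 * n choose n)"
        using prime_multiplicity_gt_zero_iff[of p "2 * n choose n"] p C0 by simp
      show ?thesis using 1 2 mult e_def by simp
    qed
  qed
qed

lemma lcmupto_double: "lcmupto (2 * n) \<le> lcmupto n * 4 ^ n"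
proof -
  have "lcmupto (2 * n) dvd lcmupto n * (2 * n choose n)"
    by (rule lcmupto_least) (rule dvd_lcm_binom)
  then have "lcmupto (2 * n) \<le> lcmupto n * (2 * n choose n)"
    using lcmupto_pos[of n] by (intro dvd_imp_le) auto
  also have "(2 * n choose n) \<le> 2 ^ (2 * n)" by (rule binomial_le_pow2)
  also have "(2::nat) ^ (2 * n) = 4 ^ n" by (simp add: power_mult)
  finally show ?thesis by simp
qed

lemma lcmupto_pow2: "lcmupto (2 ^ k) \<le> 4 ^ (2 ^ k)"
proof (induction k)
  case 0
  then show ?case by (simp add: lcmupto_def)
next
  case (Suc k)
  have "lcmupto (2 ^ Suc k) = lcmupto (2 * 2 ^ k)" by simp
  also have "\<dots> \<le> lcmupto (2 ^ k) * 4 ^ (2 ^ k)" by (rule lcmupto_double)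
  also have "\<dots> \<le> 4 ^ (2 ^ k) * 4 ^ (2 ^ k)" using Suc by simp
  also have "\<dots> = 4 ^ (2 ^ Suc k)" by (simp add: power_add[symmetric])
  finally show ?case .
qed

lemma lcmupto_bound: "lcmupto N \<le> 16 ^ N"
proof (cases "N = 0")
  case True then show ?thesis by (simp add: lcmupto_def)
next
  case False
  define k where "k = (LEAST k. N \<le> 2 ^ k)"
  have ex: "\<exists>k. N \<le> 2 ^ k" using less_exp[of N] less_imp_le by blast
  have k1: "N \<le> 2 ^ k" unfolding k_def by (rule LeastI_ex[OF ex])
  have k2: "2 ^ k \<le> 2 * N"
  proof (cases k)
    case 0 then show ?thesis using False by simp
  next
    case (Suc k')
    have "\<not> N \<le> 2 ^ k'" using not_less_Least[of k' "\<lambda>k. N \<le> 2 ^ k"] Suc k_def by simp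
    then show ?thesis using Suc by simp
  qed
  have "lcmupto N \<le> lcmupto (2 ^ k)" by (rule lcmupto_mono[OF k1])
  also have "\<dots> \<le> 4 ^ (2 ^ k)" by (rule lcmupto_pow2)
  also have "\<dots> \<le> 4 ^ (2 * N)" using k2 by (intro power_increasing) auto
  also have "(4::nat) ^ (2 * N) = 16 ^ N" by (simp add: power_mult)
  finally show ?thesis .
qed


context
  fixes K :: "complex set"
  assumes nf: "number_field K"
begin

lemma nf_0: "0 \<in> K" and nf_1: "1 \<in> K" using nf unfolding number_field_def by auto
lemma nf_add: "x \<in> K \<Longrightarrow> y \<in> K \<Longrightarrow> x + y \<in> K" using nf unfolding number_field_def by auto
lemma nf_mult: "x \<in> K \<Longrightarrow> y \<in> K \<Longrightarrow> x * y \<in> K" using nf unfolding number_field_def by auto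
lemma nf_minus: "x \<in> K \<Longrightarrow> - x \<in> K" using nf unfolding number_field_def by auto
lemma nf_inverse: "x \<in> K \<Longrightarrow> inverse x \<in> K"
  using nf nf_0 unfolding number_field_def by (cases "x = 0") auto
lemma nf_diff: "x \<in> K \<Longrightarrow> y \<in> K \<Longrightarrow> x - y \<in> K"
  using nf_add[of x "-y"] nf_minus[of y] by simp
lemma nf_divide: "x \<in> K \<Longrightarrow> y \<in> K \<Longrightarrow> x / y \<in> K"
  using nf_mult[of x "inverse y"] nf_inverse[of y] by (simp add: divide_inverse)
lemma nf_of_nat: "of_nat n \<in> K"
proof (induction n)
  case 0 then show ?case using nf_0 by simp
next
  case (Suc n) then show ?case using nf_add[OF nf_1 Suc] by simp
qed
lemma nf_of_int: "of_int z \<in> K"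
proof (cases "z \<ge> 0")
  case True
  then have "of_int z = (of_nat (nat z) :: complex)" by simp
  then show ?thesis using nf_of_nat by metis
next
  case False
  then have "of_int z = - (of_nat (nat (- z)) :: complex)" by simp
  then show ?thesis using nf_of_nat nf_minus by metis
qed
lemma nf_of_rat: "of_rat r \<in> K"
proof -
  obtain a b where ab: "quotient_of r = (a, b)" by (cases "quotient_of r") auto
  then have "r = of_int a / of_int b" by (rule quotient_of_div)
  then have "of_rat r = (of_int a / of_int b :: complex)" by (simp add: of_rat_divide)
  then show ?thesis using nf_divide[OF nf_of_int nf_of_int] by simp
qed
lemma nf_power: "x \<in> K \<Longrightarrow> x ^ n \<in> K"
  by (induction n) (auto intro: nf_mult nf_1)
lemma nf_sum: "(\<And>i. i \<in> A \<Longrightarrow> f i \<in> K) \<Longrightarrow> (\<Sum>i\<in>A. f i) \<in> K"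
proof (induction A rule: infinite_finite_induct)
  case (infinite A) then show ?case using nf_0 by simp
next
  case empty then show ?case using nf_0 by simp
next
  case (insert x F) then show ?case using nf_add by simp
qed

context
  fixes \<sigma> :: "complex \<Rightarrow> complex"
  assumes emb: "embedding K \<sigma>"
begin

lemma emb_1: "\<sigma> 1 = 1" using emb embedding_def by auto
lemma emb_add: "x \<in> K \<Longrightarrow> y \<in> K \<Longrightarrow> \<sigma> (x + y) = \<sigma> x + \<sigma> y" using emb embedding_def by auto
lemma emb_mult: "x \<in> K \<Longrightarrow> y \<in> K \<Longrightarrow> \<sigma> (x * y) = \<sigma> x * \<sigma> y" using emb embedding_def by auto
lemma emb_0: "\<sigma> 0 = 0"
proof -
  have "\<sigma> 0 = \<sigma> 0 + \<sigma> 0" using emb_add[OF nf_0 nf_0] by simp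
  then show ?thesis by simp
qed
lemma emb_minus: "x \<in> K \<Longrightarrow> \<sigma> (- x) = - \<sigma> x"
proof -
  assume x: "x \<in> K"
  have "\<sigma> (x + - x) = \<sigma> x + \<sigma> (- x)" using emb_add[OF x nf_minus[OF x]] .
  then have "\<sigma> x + \<sigma> (- x) = 0" using emb_0 by simp
  then show ?thesis by (simp add: eq_neg_iff_add_eq_0 add.commute)
qed
lemma emb_diff: "x \<in> K \<Longrightarrow> y \<in> K \<Longrightarrow> \<sigma> (x - y) = \<sigma> x - \<sigma> y"
  using emb_add[of x "-y"] emb_minus[of y] nf_minus[of y] by simp
lemma emb_of_nat: "\<sigma> (of_nat n) = of_nat n"
proof (induction n)
  case 0 then show ?case using emb_0 by simp
next
  case (Suc n)
  have "\<sigma> (of_nat (Suc n)) = \<sigma> (1 + of_nat n)" by simp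
  also have "\<dots> = 1 + of_nat n" using emb_add[OF nf_1 nf_of_nat] emb_1 Suc by simp
  finally show ?case by simp
qed
lemma emb_of_int: "\<sigma> (of_int z) = of_int z"
proof (cases "z \<ge> 0")
  case True
  then have "of_int z = (of_nat (nat z) :: complex)" by simp
  then show ?thesis using emb_of_nat by metis
next
  case False
  then have e: "of_int z = - (of_nat (nat (- z)) :: complex)" by simp
  show ?thesis unfolding e using emb_minus[OF nf_of_nat] emb_of_nat by simp
qed
lemma emb_inverse: "x \<in> K \<Longrightarrow> \<sigma> (inverse x) = inverse (\<sigma> x)"
proof (cases "x = 0")
  case True then show ?thesis using emb_0 by simp
next
  case False
  assume x: "x \<in> K"
  have "\<sigma> x * \<sigma> (inverse x) = \<sigma> (x * inverse x)" using emb_mult[OF x nf_inverse[OF x]] by simp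
  also have "\<dots> = 1" using False emb_1 by simp
  finally show ?thesis by (rule inverse_unique[symmetric])
qed
lemma emb_divide: "x \<in> K \<Longrightarrow> y \<in> K \<Longrightarrow> \<sigma> (x / y) = \<sigma> x / \<sigma> y"
  using emb_mult[of x "inverse y"] emb_inverse[of y] nf_inverse[of y] by (simp add: divide_inverse)
lemma emb_of_rat: "\<sigma> (of_rat r) = of_rat r"
proof -
  obtain a b where ab: "quotient_of r = (a, b)" by (cases "quotient_of r") auto
  then have "r = of_int a / of_int b" by (rule quotient_of_div)
  then have "of_rat r = (of_int a / of_int b :: complex)" by (simp add: of_rat_divide)
  then show ?thesis using emb_divide[OF nf_of_int nf_of_int] emb_of_int by simp
qed
lemma emb_power: "x \<in> K \<Longrightarrow> \<sigma> (x ^ n) = \<sigma> x ^ n"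
  by (induction n) (auto simp: emb_1 emb_mult nf_power)
lemma emb_sum: "finite A \<Longrightarrow> (\<And>i. i \<in> A \<Longrightarrow> f i \<in> K) \<Longrightarrow> \<sigma> (\<Sum>i\<in>A. f i) = (\<Sum>i\<in>A. \<sigma> (f i))"
proof (induction A rule: finite_induct)
  case empty then show ?case using emb_0 by simp
next
  case (insert x F)
  then show ?case using emb_add[of "f x" "sum f F"] nf_sum[of F f] by simp
qed
lemma emb_nonzero: "x \<in> K \<Longrightarrow> x \<noteq> 0 \<Longrightarrow> \<sigma> x \<noteq> 0"
  using emb_inverse[of x] emb_mult[of x "inverse x"] nf_inverse[of x] emb_1 by force

end
end

lemma rat_common_denom:
  fixes S :: "rat set"
  assumes "finite S"
  shows "\<exists>D::nat. D > 0 \<and> (\<forall>r\<in>S. \<exists>z::int. of_nat D * r = of_int z)"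
  using assms
proof (induction S rule: finite_induct)
  case empty then show ?case by (intro exI[of _ 1]) simp
next
  case (insert r S)
  obtain D where D: "D > 0" "\<forall>s\<in>S. \<exists>z::int. of_nat D * s = of_int z" using insert by blast
  obtain a b where ab: "quotient_of r = (a, b)" by (cases "quotient_of r") auto
  have r: "r = of_int a / of_int b" using ab by (rule quotient_of_div)
  have b: "b > 0" using ab by (rule quotient_of_denom_pos)
  define D' where "D' = D * nat b"
  have "D' > 0" using D b by (simp add: D'_def)
  moreover have "\<forall>s\<in>insert r S. \<exists>z::int. of_nat D' * s = of_int z"
  proof
    fix s assume s: "s \<in> insert r S"
    show "\<exists>z::int. of_nat D' * s = of_int z"
    proof (cases "s = r")
      case True
      have "of_nat D' * s = of_int (int D * a)" using b True r by (simp add: D'_def)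
      then show ?thesis by blast
    next
      case False
      then have "s \<in> S" using s by simp
      then obtain z where z: "of_nat D * s = of_int z" using D by blast
      have "of_nat D' * s = of_nat (nat b) * (of_nat D * s)" by (simp add: D'_def)
      also have "\<dots> = of_int (b * z)" using z b by simp
      finally show ?thesis by blast
    qed
  qed
  ultimately show ?case by blast
qed

lemma eigen_bound:
  fixes M :: "'i \<Rightarrow> 'i \<Rightarrow> complex" and w :: "'i \<Rightarrow> complex"
  assumes fin: "finite I" and i0: "i0 \<in> I" "w i0 \<noteq> 0"
    and ev: "\<forall>i\<in>I. z * w i = (\<Sum>j\<in>I. M i j * w j)"
  shows "norm z \<le> (\<Sum>i\<in>I. \<Sum>j\<in>I. norm (M i j))"
proof -
  define m where "m = Max ((\<lambda>i. norm (w i)) ` I)"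
  have "m \<in> (\<lambda>i. norm (w i)) ` I" unfolding m_def using fin i0 by (intro Max_in) auto
  then obtain i where i: "i \<in> I" "norm (w i) = m" by auto
  have le: "norm (w j) \<le> norm (w i)" if "j \<in> I" for j
    using i that fin unfolding m_def by (auto intro: Max_ge)
  have pos: "norm (w i) > 0" using le[OF i0(1)] i0(2) by (meson norm_not_less_zero not_le norm_le_zero_iff le_less_trans)
  have "norm z * norm (w i) = norm (\<Sum>j\<in>I. M i j * w j)" using ev i by (metis norm_mult)
  also have "\<dots> \<le> (\<Sum>j\<in>I. norm (M i j) * norm (w j))"
    by (rule order_trans[OF norm_sum]) (simp add: norm_mult)
  also have "\<dots> \<le> (\<Sum>j\<in>I. norm (M i j) * norm (w i))"
    by (intro sum_mono mult_left_mono le) auto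
  also have "\<dots> = (\<Sum>j\<in>I. norm (M i j)) * norm (w i)" by (simp add: sum_distrib_right)
  finally have "norm z \<le> (\<Sum>j\<in>I. norm (M i j))" using pos by simp
  also have "\<dots> \<le> (\<Sum>i\<in>I. \<Sum>j\<in>I. norm (M i j))"
    using i fin by (intro member_le_sum) (auto intro: sum_nonneg)
  finally show ?thesis .
qed

lemma nf_element_props:
  assumes nf: "number_field K" and x: "x \<in> K"
  shows "(\<exists>D::nat. D > 0 \<and> algebraic_integer (of_nat D * x)) \<and>
         (\<exists>T::real. \<forall>\<sigma>. embedding K \<sigma> \<longrightarrow> norm (\<sigma> x) \<le> T)"
proof -
  obtain B where B: "finite B" "B \<subseteq> K" "\<forall>y\<in>K. \<exists>r::complex \<Rightarrow> rat. y = (\<Sum>b\<in>B. of_rat (r b) * b)"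
    using nf unfolding number_field_def by blast
  have "\<forall>b\<in>B. \<exists>r::complex \<Rightarrow> rat. x * b = (\<Sum>b'\<in>B. of_rat (r b') * b')"
    using B nf_mult[OF nf x] by blast
  then obtain R where R: "\<forall>b\<in>B. x * b = (\<Sum>b'\<in>B. of_rat (R b b') * b')" by metis
  obtain r1 where r1: "1 = (\<Sum>b\<in>B. of_rat (r1 b) * b)" using B(3) nf_1[OF nf] by blast
  obtain b0 where b0: "b0 \<in> B" "b0 \<noteq> 0"
  proof (rule ccontr)
    assume "\<not> thesis"
    then have "\<forall>b\<in>B. b = 0" using that by blast
    then have "(\<Sum>b\<in>B. of_rat (r1 b) * b) = 0" by (auto intro: sum.neutral)
    then show False using r1 by simp
  qed
  have fS: "finite ((\<lambda>(b,b'). R b b') ` (B \<times> B))" using B(1) by simp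
  obtain D where D: "D > 0" "\<forall>r\<in>(\<lambda>(b,b'). R b b') ` (B \<times> B). \<exists>z::int. of_nat D * r = of_int z"
    using rat_common_denom[OF fS] by blast
  have "\<forall>b\<in>B. \<forall>b'\<in>B. \<exists>z::int. of_nat D * R b b' = of_int z" using D(2) by force
  then obtain Z where Z: "\<forall>b\<in>B. \<forall>b'\<in>B. of_nat D * R b b' = of_int (Z b b')" by metis
  have "acts (of_nat D * x) B (\<lambda>b. b)"
    unfolding acts_def
  proof (intro exI[of _ Z] ballI)
    fix b assume b: "b \<in> B"
    have "of_nat D * x * b = of_nat D * (x * b)" by (simp add: mult_ac)
    also have "\<dots> = of_nat D * (\<Sum>b'\<in>B. of_rat (R b b') * b')" using R b by simp
    also have "\<dots> = (\<Sum>b'\<in>B. of_rat (of_nat D * R b b') * b')"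
      by (subst sum_distrib_left) (simp add: of_rat_mult mult_ac)
    also have "\<dots> = (\<Sum>b'\<in>B. of_int (Z b b') * b')"
      using Z b by (intro sum.cong) auto
    finally show "of_nat D * x * b = (\<Sum>b'\<in>B. of_int (Z b b') * b')" .
  qed
  then have "algebraic_integer (of_nat D * x)"
    using acts_alg_int[OF B(1) b0(1), of "\<lambda>b. b"] b0(2) by simp
  then have P1: "\<exists>D::nat. D > 0 \<and> algebraic_integer (of_nat D * x)" using D(1) by blast
  define T where "T = (\<Sum>b\<in>B. \<Sum>b'\<in>B. norm (of_rat (R b b') :: complex))"
  have "norm (\<sigma> x) \<le> T" if \<sigma>: "embedding K \<sigma>" for \<sigma>
  proof -
    have BK: "\<And>b. b \<in> B \<Longrightarrow> b \<in> K" using B(2) by auto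
    have ev: "\<forall>b\<in>B. \<sigma> x * \<sigma> b = (\<Sum>b'\<in>B. of_rat (R b b') * \<sigma> b')"
    proof
      fix b assume b: "b \<in> B"
      have "\<sigma> x * \<sigma> b = \<sigma> (x * b)" using emb_mult[OF nf \<sigma> x BK[OF b]] by simp
      also have "\<dots> = \<sigma> (\<Sum>b'\<in>B. of_rat (R b b') * b')" using R b by simp
      also have "\<dots> = (\<Sum>b'\<in>B. \<sigma> (of_rat (R b b') * b'))"
        using B(1) BK by (intro emb_sum[OF nf \<sigma>]) (auto intro: nf_mult[OF nf] nf_of_rat[OF nf])
      also have "\<dots> = (\<Sum>b'\<in>B. of_rat (R b b') * \<sigma> b')"
        using BK by (intro sum.cong refl) (simp add: emb_mult[OF nf \<sigma>] nf_of_rat[OF nf] emb_of_rat[OF nf \<sigma>])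
      finally show "\<sigma> x * \<sigma> b = (\<Sum>b'\<in>B. of_rat (R b b') * \<sigma> b')" .
    qed
    obtain b1 where b1: "b1 \<in> B" "\<sigma> b1 \<noteq> 0"
    proof (rule ccontr)
      assume "\<not> thesis"
      then have z: "\<forall>b\<in>B. \<sigma> b = 0" using that by blast
      have "1 = \<sigma> 1" using emb_1[OF nf \<sigma>] by simp
      also have "\<dots> = \<sigma> (\<Sum>b\<in>B. of_rat (r1 b) * b)" using r1 by simp
      also have "\<dots> = (\<Sum>b\<in>B. \<sigma> (of_rat (r1 b) * b))"
        using B(1) BK by (intro emb_sum[OF nf \<sigma>]) (auto intro: nf_mult[OF nf] nf_of_rat[OF nf])
      also have "\<dots> = (\<Sum>b\<in>B. of_rat (r1 b) * \<sigma> b)"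
        using BK by (intro sum.cong refl) (simp add: emb_mult[OF nf \<sigma>] nf_of_rat[OF nf] emb_of_rat[OF nf \<sigma>])
      also have "\<dots> = 0" using z by simp
      finally show False by simp
    qed
    show ?thesis unfolding T_def
      by (rule eigen_bound[OF B(1) b1 ev])
  qed
  then show ?thesis using P1 by blast
qed


lemma deriv_iter_mult:
  fixes G :: "complex fps"
  shows "(fps_deriv ^^ j) ((fps_X - fps_const \<xi>) * G) =
         (fps_X - fps_const \<xi>) * (fps_deriv ^^ j) G + fps_const (of_nat j) * (fps_deriv ^^ (j - 1)) G"
proof (induction j)
  case 0 then show ?case by simp
next
  case (Suc j)
  have "(fps_deriv ^^ Suc j) ((fps_X - fps_const \<xi>) * G) =
        fps_deriv ((fps_X - fps_const \<xi>) * (fps_deriv ^^ j) G + fps_const (of_nat j) * (fps_deriv ^^ (j - 1)) G)"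
    using Suc by simp
  also have "\<dots> = (fps_deriv ^^ j) G + (fps_X - fps_const \<xi>) * (fps_deriv ^^ Suc j) G
                 + fps_const (of_nat j) * fps_deriv ((fps_deriv ^^ (j - 1)) G)"
    by (simp add: fps_deriv_mult)
  also have "fps_const (of_nat j) * fps_deriv ((fps_deriv ^^ (j - 1)) G) = fps_const (of_nat j) * (fps_deriv ^^ j) G"
    by (cases j) auto
  finally show ?case by (simp add: algebra_simps fps_const_add[symmetric])
qed

lemma sum_atMost_Suc_zero_last: "f (Suc n) = 0 \<Longrightarrow> (\<Sum>i\<le>Suc n. f i) = (\<Sum>i\<le>n. f i)"
  by simp

lemma holonomic_div:
  fixes K :: "complex set" and F G :: "complex fps"
  assumes nf: "number_field K" and xi: "\<xi> \<in> K" and hol: "holonomic K F"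
    and eq: "(fps_X - fps_const \<xi>) * G = F"
  shows "holonomic K G"
proof -
  obtain m c where cK: "\<forall>i\<le>m. \<forall>j\<le>m. c i j \<in> K" and cnz: "\<exists>i\<le>m. \<exists>j\<le>m. c i j \<noteq> 0"
    and L: "(\<Sum>i\<le>m. \<Sum>j\<le>m. fps_const (c i j) * fps_X ^ i * (fps_deriv ^^ j) F) = 0"
    using hol unfolding holonomic_def by blast
  define c0 where "c0 i j = (if i \<le> m \<and> j \<le> m then c i j else 0)" for i j
  have c0K: "c0 i j \<in> K" for i j using cK nf_0[OF nf] by (simp add: c0_def)
  have c0z: "c0 i j = 0" if "i > m \<or> j > m" for i j using that by (auto simp: c0_def)
  define c' where "c' i j = (if i = 0 then 0 else c0 (i - 1) j) - \<xi> * c0 i j + of_nat (Suc j) * c0 i (Suc j)" for i j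
  define D where "D j = (fps_deriv ^^ j) G" for j
  define E where "E = fps_X - fps_const \<xi>"
  have DF: "(fps_deriv ^^ j) F = E * D j + fps_const (of_nat j) * D (j - 1)" for j
    unfolding D_def E_def eq[symmetric] by (rule deriv_iter_mult)
  have c'K: "\<forall>i\<le>Suc m. \<forall>j\<le>Suc m. c' i j \<in> K"
    using nf c0K xi by (auto simp: c'_def intro!: nf_add nf_diff nf_mult nf_of_nat nf_0 nf_1)
  define SJ where "SJ = {j. j \<le> m \<and> (\<exists>i\<le>m. c i j \<noteq> 0)}"
  have SJne: "SJ \<noteq> {}" using cnz by (auto simp: SJ_def)
  have SJfin: "finite SJ" by (auto simp: SJ_def)
  define J where "J = Max SJ"
  have J: "J \<in> SJ" unfolding J_def by (rule Max_in[OF SJfin SJne])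
  have Jmax: "j \<in> SJ \<Longrightarrow> j \<le> J" for j unfolding J_def using SJfin by simp
  define SI where "SI = {i. i \<le> m \<and> c i J \<noteq> 0}"
  have SIne: "SI \<noteq> {}" using J by (auto simp: SI_def SJ_def)
  have SIfin: "finite SI" by (auto simp: SI_def)
  define I where "I = Max SI"
  have I: "I \<in> SI" unfolding I_def by (rule Max_in[OF SIfin SIne])
  have Imax: "i \<in> SI \<Longrightarrow> i \<le> I" for i unfolding I_def using SIfin by simp
  have "c0 (Suc I) J = 0"
  proof (cases "Suc I \<le> m")
    case True
    have "Suc I \<notin> SI" using Imax by fastforce
    then show ?thesis using True J by (auto simp: c0_def SI_def SJ_def)
  next
    case False then show ?thesis by (simp add: c0_def)
  qed
  moreover have "c0 (Suc I) (Suc J) = 0"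
  proof (cases "Suc I \<le> m \<and> Suc J \<le> m")
    case True
    have "Suc J \<notin> SJ" using Jmax by fastforce
    then show ?thesis using True by (auto simp: c0_def SJ_def)
  next
    case False then show ?thesis by (auto simp: c0_def)
  qed
  moreover have "c0 I J \<noteq> 0" using I J by (auto simp: c0_def SI_def SJ_def)
  ultimately have "c' (Suc I) J \<noteq> 0" by (simp add: c'_def)
  moreover have "Suc I \<le> Suc m" "J \<le> Suc m" using I J by (auto simp: SI_def SJ_def)
  ultimately have c'nz: "\<exists>i\<le>Suc m. \<exists>j\<le>Suc m. c' i j \<noteq> 0" by blast
  define T where "T i j = fps_const (c0 i j) * fps_X ^ i * (fps_deriv ^^ j) F" for i j
  have "(\<Sum>i\<le>m. \<Sum>j\<le>m. fps_const (c i j) * fps_X ^ i * (fps_deriv ^^ j) F) = (\<Sum>i\<le>m. \<Sum>j\<le>m. T i j)"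
    by (intro sum.cong refl) (simp add: T_def c0_def)
  also have "\<dots> = (\<Sum>i\<le>Suc m. \<Sum>j\<le>Suc m. T i j)"
    by (simp add: T_def c0z)
  also have "\<dots> = (\<Sum>i\<le>Suc m. \<Sum>j\<le>Suc m. fps_const (c0 i j) * fps_X ^ Suc i * D j)
                 - (\<Sum>i\<le>Suc m. \<Sum>j\<le>Suc m. fps_const (\<xi> * c0 i j) * fps_X ^ i * D j)
                 + (\<Sum>i\<le>Suc m. \<Sum>j\<le>Suc m. fps_const (of_nat j * c0 i j) * fps_X ^ i * D (j - 1))"
  proof -
    have Tij: "T i j = fps_const (c0 i j) * fps_X ^ Suc i * D j - fps_const (\<xi> * c0 i j) * fps_X ^ i * D j
                 + fps_const (of_nat j * c0 i j) * fps_X ^ i * D (j - 1)" for i j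
    proof -
      have "T i j = fps_const (c0 i j) * fps_X ^ i * (fps_X * D j) - fps_const (c0 i j) * fps_X ^ i * (fps_const \<xi> * D j)
                 + fps_const (c0 i j) * fps_X ^ i * (fps_const (of_nat j) * D (j - 1))"
        unfolding T_def DF E_def by (simp only: ring_distribs)
      then show ?thesis by (simp only: fps_const_mult[symmetric] power_Suc mult_ac)
    qed
    show ?thesis by (simp only: Tij sum.distrib sum_subtractf)
  qed
  finally have L': "(\<Sum>i\<le>Suc m. \<Sum>j\<le>Suc m. fps_const (c0 i j) * fps_X ^ Suc i * D j)
                 - (\<Sum>i\<le>Suc m. \<Sum>j\<le>Suc m. fps_const (\<xi> * c0 i j) * fps_X ^ i * D j)
                 + (\<Sum>i\<le>Suc m. \<Sum>j\<le>Suc m. fps_const (of_nat j * c0 i j) * fps_X ^ i * D (j - 1)) = 0"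
    using L by simp
  have A1a: "(\<Sum>i\<le>Suc m. \<Sum>j\<le>Suc m. fps_const (c0 i j) * fps_X ^ Suc i * D j)
      = (\<Sum>i\<le>m. \<Sum>j\<le>Suc m. fps_const (c0 i j) * fps_X ^ Suc i * D j)"
    by (subst sum.atMost_Suc) (simp add: c0z)
  have A1b: "(\<Sum>i\<le>Suc m. \<Sum>j\<le>Suc m. fps_const (if i = 0 then 0 else c0 (i - 1) j) * fps_X ^ i * D j)
      = (\<Sum>i\<le>m. \<Sum>j\<le>Suc m. fps_const (c0 i j) * fps_X ^ Suc i * D j)"
    by (subst sum.atMost_Suc_shift) simp
  have A3: "(\<Sum>i\<le>Suc m. \<Sum>j\<le>Suc m. fps_const (of_nat j * c0 i j) * fps_X ^ i * D (j - 1))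
      = (\<Sum>i\<le>Suc m. \<Sum>j\<le>Suc m. fps_const (of_nat (Suc j) * c0 i (Suc j)) * fps_X ^ i * D j)"
  proof (rule sum.cong[OF refl])
    fix i assume "i \<in> {..Suc m}"
    have "(\<Sum>j\<le>Suc m. fps_const (of_nat j * c0 i j) * fps_X ^ i * D (j - 1))
        = (\<Sum>j\<le>m. fps_const (of_nat (Suc j) * c0 i (Suc j)) * fps_X ^ i * D j)"
      by (subst sum.atMost_Suc_shift) simp
    also have "\<dots> = (\<Sum>j\<le>Suc m. fps_const (of_nat (Suc j) * c0 i (Suc j)) * fps_X ^ i * D j)"
      by (subst sum.atMost_Suc) (simp add: c0z)
    finally show "(\<Sum>j\<le>Suc m. fps_const (of_nat j * c0 i j) * fps_X ^ i * D (j - 1))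
        = (\<Sum>j\<le>Suc m. fps_const (of_nat (Suc j) * c0 i (Suc j)) * fps_X ^ i * D j)" .
  qed
  have Cij: "fps_const (c' i j) * fps_X ^ i * (fps_deriv ^^ j) G
      = fps_const (if i = 0 then 0 else c0 (i - 1) j) * fps_X ^ i * D j
        - fps_const (\<xi> * c0 i j) * fps_X ^ i * D j
        + fps_const (of_nat (Suc j) * c0 i (Suc j)) * fps_X ^ i * D j" for i j
    unfolding c'_def D_def by (simp only: fps_const_add[symmetric] fps_const_sub[symmetric] ring_distribs)
  have "(\<Sum>i\<le>Suc m. \<Sum>j\<le>Suc m. fps_const (c' i j) * fps_X ^ i * (fps_deriv ^^ j) G)
      = (\<Sum>i\<le>Suc m. \<Sum>j\<le>Suc m. fps_const (if i = 0 then 0 else c0 (i - 1) j) * fps_X ^ i * D j)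
                 - (\<Sum>i\<le>Suc m. \<Sum>j\<le>Suc m. fps_const (\<xi> * c0 i j) * fps_X ^ i * D j)
                 + (\<Sum>i\<le>Suc m. \<Sum>j\<le>Suc m. fps_const (of_nat (Suc j) * c0 i (Suc j)) * fps_X ^ i * D j)"
    by (simp only: Cij sum.distrib sum_subtractf)
  also have "\<dots> = 0" using L' unfolding A1a A1b A3 .
  finally show ?thesis unfolding holonomic_def using c'K c'nz by blast
qed


lemma exp_term_le: "(Y::real) \<ge> 0 \<Longrightarrow> Y ^ i / fact i \<le> exp Y"
proof -
  assume Y: "Y \<ge> 0"
  have s: "(\<lambda>n. Y ^ n / fact n) sums exp Y"
    using exp_converges[of Y] by (simp add: divide_inverse mult.commute)
  have "(\<Sum>n\<in>{i}. Y ^ n / fact n) \<le> (\<Sum>n. Y ^ n / fact n)"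
    by (rule sum_le_suminf) (use s Y in \<open>auto simp: sums_iff\<close>)
  then show ?thesis using s by (simp add: sums_iff)
qed

lemma fact_div_bound:
  fixes X :: real and Q :: nat
  assumes Q: "Q > 0" and X: "X \<ge> 0"
  shows "\<exists>M. \<forall>j. X ^ j / fact (j div Q) \<le> M * (1/2) ^ j"
proof -
  define X' where "X' = max X 1"
  define Y where "Y = (2 * X') ^ Q"
  have X'1: "X' \<ge> 1" by (simp add: X'_def)
  have Y1: "Y \<ge> 1" unfolding Y_def using X'1 by (intro one_le_power) simp
  have "X ^ j / fact (j div Q) \<le> Y * exp Y * (1/2) ^ j" for j
  proof -
    define i where "i = j div Q"
    have e: "Q * i + j mod Q = j" unfolding i_def using div_mult_mod_eq[of j Q] by (simp add: mult.commute)
    have r: "j mod Q < Q" using Q by simp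
    have q: "Q * (i + 1) = Q * i + Q" by simp
    have ji: "j \<le> Q * (i + 1)" using e r q by linarith
    have "(2 * X') ^ j \<le> (2 * X') ^ (Q * (i + 1))"
      using X'1 ji by (intro power_increasing) auto
    also have "\<dots> = Y ^ (i + 1)" unfolding Y_def by (rule power_mult)
    finally have A: "(2 * X') ^ j \<le> Y ^ (i + 1)" .
    have "X ^ j \<le> X' ^ j" using X by (intro power_mono) (auto simp: X'_def)
    also have "X' ^ j = (2 * X' * (1/2)) ^ j" by simp
    also have "\<dots> = (2 * X') ^ j * (1/2) ^ j" by (rule power_mult_distrib)
    also have "\<dots> \<le> Y ^ (i + 1) * (1/2) ^ j" using A by (intro mult_right_mono) auto
    finally have B: "X ^ j \<le> Y * Y ^ i * (1/2) ^ j" by simp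
    have "X ^ j / fact i \<le> Y * (Y ^ i / fact i) * (1/2) ^ j"
      using B by (simp add: divide_right_mono field_simps)
    also have "\<dots> \<le> Y * exp Y * (1/2) ^ j"
      using exp_term_le[of Y i] Y1 by (intro mult_right_mono mult_left_mono) auto
    finally show ?thesis by (simp add: i_def)
  qed
  then show ?thesis by blast
qed

lemma fact_div_summable:
  fixes X :: real and Q :: nat
  assumes Q: "Q > 0" and X: "X \<ge> 0"
  shows "summable (\<lambda>j. X ^ j / fact (j div Q))"
proof -
  obtain M where M: "\<And>j. X ^ j / fact (j div Q) \<le> M * (1/2) ^ j" using fact_div_bound[OF Q X] by blast
  have "summable (\<lambda>j. M * (1/2::real) ^ j)" by (intro summable_mult summable_geometric) simp
  then show ?thesis
    by (rule summable_comparison_test'[where N=0]) (use M X in \<open>auto\<close>)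
qed

lemma div_add_ge: "(n div Q) + (j div Q) \<le> (j + n + 1) div (Q::nat)"
proof -
  have "(n div Q) + (j div Q) \<le> (n + j) div Q" using div_add1_eq[of n j Q] by simp
  also have "\<dots> \<le> (j + n + 1) div Q" by (intro div_le_mono) simp
  finally show ?thesis .
qed

lemma fact_ratio_le:
  fixes P Q n j :: nat
  assumes P: "P \<ge> 1"
  shows "(fact (n div Q) :: real) ^ P / fact ((j + n + 1) div Q) ^ P \<le> 1 / fact (j div Q)"
proof -
  have f1: "(1::real) \<le> fact (j div Q)" by simp
  have "(fact (n div Q) :: real) * fact (j div Q) \<le> fact ((n div Q) + (j div Q))"
    using fact_fact_dvd_fact[of "n div Q" "j div Q"] by (metis dvd_imp_le fact_gt_zero of_nat_fact of_nat_le_iff of_nat_mult)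
  also have "\<dots> \<le> fact ((j + n + 1) div Q)" by (intro fact_mono div_add_ge)
  finally have A: "(fact (n div Q) :: real) * fact (j div Q) \<le> fact ((j + n + 1) div Q)" .
  have "(fact (n div Q) :: real) ^ P * fact (j div Q) \<le> fact (n div Q) ^ P * fact (j div Q) ^ P"
    using f1 P by (intro mult_left_mono) (auto simp: one_le_power order_trans[OF _ power_increasing[of 1 P]])
  also have "\<dots> = (fact (n div Q) * fact (j div Q)) ^ P" by (simp add: power_mult_distrib)
  also have "\<dots> \<le> fact ((j + n + 1) div Q) ^ P" using A by (intro power_mono) auto
  finally have "(fact (n div Q) :: real) ^ P * fact (j div Q) \<le> fact ((j + n + 1) div Q) ^ P" .
  then show ?thesis by (simp add: field_simps)
qed

lemma fact_le_pow: "P \<ge> 1 \<Longrightarrow> (fact m :: real) \<le> fact m ^ P"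
proof -
  assume P: "P \<ge> 1"
  have "(fact m :: real) ^ 1 \<le> fact m ^ P" by (rule power_increasing[OF P]) simp
  then show ?thesis by simp
qed


lemma nf_fact: "number_field K \<Longrightarrow> (fact k :: complex) \<in> K"
  using nf_of_nat[of K "fact k"] by simp

lemma emb_fact: "number_field K \<Longrightarrow> embedding K \<sigma> \<Longrightarrow> \<sigma> (fact k :: complex) = fact k"
  using emb_of_nat[of K \<sigma> "fact k"] by simp

lemma div_le_self_real: "(x::real) \<ge> 0 \<Longrightarrow> y \<ge> 1 \<Longrightarrow> x / y \<le> x"
  using divide_left_mono[of 1 y x] by simp

lemma core_zero:
  fixes K :: "complex set" and F G :: "complex fps" and a :: "nat \<Rightarrow> complex" and P Q :: nat
  assumes nf: "number_field K" and Q: "Q > 0" and P: "P \<ge> 1"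
    and a: "condG K a"
    and Fa: "\<And>n. F $ n = inverse (fact (n div Q) ^ P) * a n"
    and Gs: "\<And>n. G $ n = F $ Suc n"
  shows "condG K (\<lambda>n. G $ n * fact (n div Q) ^ P)"
proof -
  have aK: "a n \<in> K" for n using a by (simp add: condG_def)
  obtain C where C: "C > 0" and Cn: "\<And>n. (\<forall>\<sigma>. embedding K \<sigma> \<longrightarrow> norm (\<sigma> (a n)) \<le> C ^ (n + 1)) \<and>
        (\<exists>d::nat. d > 0 \<and> real d \<le> C ^ (n + 1) \<and> (\<forall>k\<le>n. algebraic_integer (of_nat d * a k)))"
    using a unfolding condG_def by blast
  define C1 where "C1 = max C 1"
  have C1: "C1 \<ge> 1" by (simp add: C1_def)
  have CC1: "C ^ n \<le> C1 ^ n" for n using C by (intro power_mono) (auto simp: C1_def)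
  define m :: "nat \<Rightarrow> nat" where "m n = fact (Suc n div Q) div fact (n div Q)" for n
  have mfact: "(fact (Suc n div Q) :: nat) = m n * fact (n div Q)" for n
  proof -
    have "fact (n div Q) dvd (fact (Suc n div Q) :: nat)" by (intro fact_dvd div_le_mono) simp
    then show ?thesis by (simp add: m_def)
  qed
  have mbound: "1 \<le> m n \<and> m n \<le> Suc n" for n
  proof (cases "Suc n mod Q = 0")
    case True
    then have e: "Suc n div Q = Suc (n div Q)" by (simp add: div_Suc)
    have "Suc (n div Q) * fact (n div Q) = m n * (fact (n div Q) :: nat)"
      using mfact[of n] unfolding e by (metis fact_Suc of_nat_id)
    then have "m n = Suc (n div Q)" by (metis fact_nonzero mult_right_cancel)
    moreover have "Suc (n div Q) \<le> Suc n" by (simp add: div_le_dividend)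
    ultimately show ?thesis by simp
  next
    case False
    then have e: "Suc n div Q = n div Q" by (simp add: div_Suc)
    have "m n = 1" using mfact[of n] unfolding e by simp
    then show ?thesis by simp
  qed
  have mfactC: "(fact (Suc n div Q) :: complex) = of_nat (m n) * fact (n div Q)" for n
    using arg_cong[OF mfact[of n], of "of_nat :: nat \<Rightarrow> complex"] by simp
  have bform: "G $ n * fact (n div Q) ^ P = a (Suc n) / of_nat (m n) ^ P" for n
  proof -
    have m0: "(of_nat (m n) :: complex) \<noteq> 0" using mbound[of n] by simp
    have "G $ n * fact (n div Q) ^ P = a (Suc n) * (fact (n div Q) ^ P / (of_nat (m n) * fact (n div Q)) ^ P)"
      using Gs Fa mfactC by (simp add: field_simps)
    also have "\<dots> = a (Suc n) / of_nat (m n) ^ P" using m0 by (simp add: power_mult_distrib field_simps)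
    finally show ?thesis .
  qed
  define C' where "C' = C1 ^ 2 * 16 ^ P"
  have C'pos: "C' > 0" using C1 by (simp add: C'_def)
  have C1C': "C1 ^ 2 \<le> C'" using C1 by (simp add: C'_def one_le_power)
  have "\<forall>n. (\<forall>\<sigma>. embedding K \<sigma> \<longrightarrow> norm (\<sigma> (G $ n * fact (n div Q) ^ P)) \<le> C' ^ (n + 1)) \<and>
        (\<exists>d::nat. d > 0 \<and> real d \<le> C' ^ (n + 1) \<and> (\<forall>k\<le>n. algebraic_integer (of_nat d * (G $ k * fact (k div Q) ^ P))))"
  proof
    fix n
    have pow: "C1 ^ (Suc n + 1) \<le> (C1 ^ 2) ^ (n + 1)"
    proof -
      have "C1 ^ (Suc n + 1) \<le> C1 ^ (2 * (n + 1))" using C1 by (intro power_increasing) auto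
      also have "\<dots> = (C1 ^ 2) ^ (n + 1)" by (rule power_mult)
      finally show ?thesis .
    qed
    have part1: "norm (\<sigma> (G $ n * fact (n div Q) ^ P)) \<le> C' ^ (n + 1)" if \<sigma>: "embedding K \<sigma>" for \<sigma>
    proof -
      have mK: "(of_nat (m n) :: complex) ^ P \<in> K" using nf_power[OF nf nf_of_nat[OF nf]] by simp
      have "\<sigma> (G $ n * fact (n div Q) ^ P) = \<sigma> (a (Suc n)) / of_nat (m n) ^ P"
        unfolding bform using emb_divide[OF nf \<sigma> aK mK] emb_power[OF nf \<sigma> nf_of_nat[OF nf]] emb_of_nat[OF nf \<sigma>]
        by simp
      then have "norm (\<sigma> (G $ n * fact (n div Q) ^ P)) = norm (\<sigma> (a (Suc n))) / of_nat (m n) ^ P"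
        by (simp add: norm_divide norm_power)
      also have "\<dots> \<le> norm (\<sigma> (a (Suc n)))"
        using mbound[of n] by (intro div_le_self_real) (auto simp: one_le_power)
      also have "\<dots> \<le> C ^ (Suc n + 1)" using Cn[of "Suc n"] \<sigma> by blast
      also have "\<dots> \<le> C1 ^ (Suc n + 1)" by (rule CC1)
      also have "\<dots> \<le> (C1 ^ 2) ^ (n + 1)" by (rule pow)
      also have "\<dots> \<le> C' ^ (n + 1)" using C1C' C1 by (intro power_mono) auto
      finally show ?thesis .
    qed
    obtain d :: nat where d: "d > 0" "real d \<le> C ^ (Suc n + 1)" "\<forall>k\<le>Suc n. algebraic_integer (of_nat d * a k)"
      using Cn[of "Suc n"] by blast
    define L where "L = lcmupto (Suc n)"
    define d' where "d' = d * L ^ P"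
    have Lpos: "L > 0" by (simp add: L_def lcmupto_pos)
    have "d' > 0" using d Lpos by (simp add: d'_def)
    moreover have "real d' \<le> C' ^ (n + 1)"
    proof -
      have "real d' = real d * real L ^ P" by (simp add: d'_def)
      also have "\<dots> \<le> C1 ^ (Suc n + 1) * (16 ^ (Suc n)) ^ P"
      proof (intro mult_mono)
        show "real d \<le> C1 ^ (Suc n + 1)" using d(2) CC1 order_trans by blast
        have "real L \<le> real ((16::nat) ^ Suc n)" unfolding L_def using lcmupto_bound[of "Suc n"] of_nat_le_iff by blast
        then have "real L \<le> 16 ^ Suc n" by simp
        then show "real L ^ P \<le> (16 ^ Suc n) ^ P" by (intro power_mono) auto
      qed (use C1 in \<open>auto intro!: mult_nonneg_nonneg zero_le_power\<close>)
      also have "\<dots> = C1 ^ (Suc n + 1) * (16 ^ P) ^ (n + 1)"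
        by (metis power_mult mult.commute Suc_eq_plus1)
      also have "\<dots> \<le> (C1 ^ 2) ^ (n + 1) * (16 ^ P) ^ (n + 1)"
        using pow by (intro mult_right_mono) auto
      also have "\<dots> = C' ^ (n + 1)" by (simp add: C'_def power_mult_distrib)
      finally show ?thesis .
    qed
    moreover have "\<forall>k\<le>n. algebraic_integer (of_nat d' * (G $ k * fact (k div Q) ^ P))"
    proof (intro allI impI)
      fix k assume k: "k \<le> n"
      have mk: "m k dvd L" unfolding L_def using mbound[of k] k by (intro dvd_lcmupto) auto
      then have Lm: "L = (L div m k) * m k" by simp
      have m0: "(of_nat (m k) :: complex) \<noteq> 0" using mbound[of k] by simp
      have "of_nat d' * (G $ k * fact (k div Q) ^ P) = (of_nat d * a (Suc k)) * of_nat ((L div m k) ^ P)"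
      proof -
        have "(of_nat L :: complex) ^ P = of_nat ((L div m k) ^ P) * of_nat (m k) ^ P"
          using arg_cong[OF Lm, of "\<lambda>x. (of_nat x :: complex) ^ P"] by (simp add: power_mult_distrib)
        then show ?thesis unfolding bform d'_def using m0 by (simp add: field_simps)
      qed
      moreover have "algebraic_integer (of_nat d * a (Suc k))" using d(3) k by simp
      moreover have "algebraic_integer (of_nat ((L div m k) ^ P))" by (rule alg_int_of_nat)
      ultimately show "algebraic_integer (of_nat d' * (G $ k * fact (k div Q) ^ P))"
        by (metis alg_int_mult)
    qed
    ultimately show "(\<forall>\<sigma>. embedding K \<sigma> \<longrightarrow> norm (\<sigma> (G $ n * fact (n div Q) ^ P)) \<le> C' ^ (n + 1)) \<and>
        (\<exists>d::nat. d > 0 \<and> real d \<le> C' ^ (n + 1) \<and> (\<forall>k\<le>n. algebraic_integer (of_nat d * (G $ k * fact (k div Q) ^ P))))"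
      using part1 by blast
  qed
  moreover have "G $ n * fact (n div Q) ^ P \<in> K" for n
    using Gs Fa aK nf by (auto intro!: nf_mult nf_inverse nf_power nf_fact)
  ultimately show ?thesis unfolding condG_def using C'pos by blast
qed


lemma embedding_id: "embedding K (\<lambda>x. x)" by (simp add: embedding_def)

lemma core_nonzero:
  fixes K :: "complex set" and F G :: "complex fps" and a :: "nat \<Rightarrow> complex" and P Q :: nat and \<xi> :: complex
  assumes nf: "number_field K" and xi: "\<xi> \<in> K" "\<xi> \<noteq> 0" and Q: "Q > 0" and P: "P \<ge> 1"
    and a: "condG K a"
    and Fa: "\<And>n. F $ n = inverse (fact (n div Q) ^ P) * a n"
    and van: "\<And>\<sigma>. embedding K \<sigma> \<Longrightarrow> (\<Sum>n. \<sigma> (F $ n) * \<sigma> \<xi> ^ n) = 0"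
    and Gf: "\<And>n. G $ n = - (\<Sum>k\<le>n. F $ k * \<xi> ^ k) * inverse \<xi> ^ (n + 1)"
  shows "condG K (\<lambda>n. G $ n * fact (n div Q) ^ P)"
proof -
  define u where "u = inverse \<xi>"
  define fr :: "nat \<Rightarrow> complex" where "fr k = fact (k div Q) ^ P" for k
  have fr0: "fr k \<noteq> 0" for k by (simp add: fr_def)
  have uK: "u \<in> K" using nf_inverse[OF nf xi(1)] by (simp add: u_def)
  have xu: "\<xi> * u = 1" using xi(2) by (simp add: u_def)
  have aK: "a n \<in> K" for n using a by (simp add: condG_def)
  have frK: "fr k \<in> K" for k unfolding fr_def using nf by (intro nf_power nf_fact)
  have invfK: "inverse (fr k) \<in> K" for k using nf frK by (intro nf_inverse)
  have FK: "F $ n \<in> K" for n using Fa[of n] aK invfK nf_mult[OF nf] by (simp add: fr_def)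
  have Fa': "F $ n = inverse (fr n) * a n" for n using Fa by (simp add: fr_def)
  have GK: "G $ n \<in> K" for n
    using Gf[of n] nf FK xi(1) uK by (auto simp: u_def[symmetric] intro!: nf_mult nf_minus nf_sum nf_power)
  obtain C where C: "C > 0" and Cn: "\<And>n. (\<forall>\<sigma>. embedding K \<sigma> \<longrightarrow> norm (\<sigma> (a n)) \<le> C ^ (n + 1)) \<and>
        (\<exists>d::nat. d > 0 \<and> real d \<le> C ^ (n + 1) \<and> (\<forall>k\<le>n. algebraic_integer (of_nat d * a k)))"
    using a unfolding condG_def by blast
  define C1 where "C1 = max C 1"
  have C1: "C1 \<ge> 1" by (simp add: C1_def)
  have CC1: "C ^ n \<le> C1 ^ n" for n using C by (intro power_mono) (auto simp: C1_def)
  obtain D0 :: nat where D0: "D0 > 0" "algebraic_integer (of_nat D0 * u)"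
    using nf_element_props[OF nf uK] by blast
  obtain T where T: "\<And>\<sigma>. embedding K \<sigma> \<Longrightarrow> norm (\<sigma> \<xi>) \<le> T"
    using nf_element_props[OF nf xi(1)] by blast
  have T0: "T \<ge> 0" using T[OF embedding_id] norm_ge_zero order_trans by blast
  define X where "X = C1 * T"
  have X0: "X \<ge> 0" using C1 T0 by (simp add: X_def)
  have Ssum: "summable (\<lambda>j. X ^ j / fact (j div Q))" by (rule fact_div_summable[OF Q X0])
  define S where "S = (\<Sum>j. X ^ j / fact (j div Q))"
  have S0: "S \<ge> 0" unfolding S_def by (rule suminf_nonneg[OF Ssum]) (simp add: X0)
  define C' where "C' = max (C1 ^ 2 * (S + 1)) (C1 * of_nat D0)"
  have C'1: "C1 ^ 2 * (S + 1) \<le> C'" and C'2: "C1 * of_nat D0 \<le> C'" by (simp_all add: C'_def)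
  have C'pos: "C' > 0" using C'1 C1 S0 by (smt (verit) mult_pos_pos one_le_power zero_less_power)
  have conj: "norm (\<sigma> (G $ n * fr n)) \<le> C' ^ (n + 1)" if \<sigma>: "embedding K \<sigma>" for \<sigma> n
  proof -
    define \<tau> where "\<tau> = \<sigma> \<xi>"
    have \<tau>0: "\<tau> \<noteq> 0" unfolding \<tau>_def by (rule emb_nonzero[OF nf \<sigma> xi])
    have \<tau>T: "norm \<tau> \<le> T" unfolding \<tau>_def by (rule T[OF \<sigma>])
    have \<sigma>fr: "\<sigma> (fr k) = fr k" for k
      unfolding fr_def using emb_power[OF nf \<sigma> nf_fact[OF nf]] emb_fact[OF nf \<sigma>] by simp
    have \<sigma>F: "\<sigma> (F $ k) = inverse (fr k) * \<sigma> (a k)" for k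
      unfolding Fa' using emb_mult[OF nf \<sigma> invfK aK] emb_inverse[OF nf \<sigma> frK] \<sigma>fr by simp
    define g where "g k = \<sigma> (F $ k) * \<tau> ^ k" for k
    have nfr: "norm (fr k) = fact (k div Q) ^ P" for k by (simp add: fr_def norm_power)
    have frge: "(fact (k div Q) :: real) \<le> fact (k div Q) ^ P" for k by (rule fact_le_pow[OF P])
    have ga: "norm (\<sigma> (a k)) \<le> C1 ^ (k + 1)" for k using Cn[of k] \<sigma> CC1[of "k+1"] by auto
    have gbound: "norm (g k) \<le> C1 * (X ^ k / fact (k div Q))" for k
    proof -
      have "norm (g k) = norm (inverse (fr k)) * norm (\<sigma> (a k)) * norm (\<tau> ^ k)"
        by (simp add: g_def \<sigma>F norm_mult)
      also have "\<dots> = norm (\<sigma> (a k)) * norm \<tau> ^ k / fact (k div Q) ^ P"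
        by (simp add: norm_inverse nfr norm_power divide_inverse mult_ac)
      also have "\<dots> \<le> C1 ^ (k + 1) * T ^ k / fact (k div Q)"
      proof (rule frac_le)
        show "0 \<le> C1 ^ (k + 1) * T ^ k" using C1 T0 by simp
        show "norm (\<sigma> (a k)) * norm \<tau> ^ k \<le> C1 ^ (k + 1) * T ^ k"
          using ga \<tau>T C1 by (intro mult_mono power_mono) auto
        show "0 < (fact (k div Q) :: real)" by simp
        show "(fact (k div Q) :: real) \<le> fact (k div Q) ^ P" by (rule frge)
      qed
      also have "\<dots> = C1 * (X ^ k / fact (k div Q))" by (simp add: X_def power_mult_distrib)
      finally show ?thesis .
    qed
    have gsum: "summable g"
      by (rule summable_comparison_test'[OF summable_mult[OF Ssum, of C1] gbound])
    have "g = (\<lambda>k. \<sigma> (F $ k) * \<sigma> \<xi> ^ k)" by (rule ext) (simp add: g_def \<tau>_def)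
    then have "suminf g = 0" using van[OF \<sigma>] by simp
    then have "0 = (\<Sum>j. g (j + Suc n)) + sum g {..<Suc n}"
      using suminf_split_initial_segment[OF gsum, of "Suc n"] by simp
    then have split: "(\<Sum>k\<le>n. g k) = - (\<Sum>j. g (j + Suc n))"
      by (simp add: lessThan_Suc_atMost eq_neg_iff_add_eq_0 add.commute)
    have sumK: "(\<Sum>k\<le>n. F $ k * \<xi> ^ k) \<in> K" using nf FK xi(1) by (intro nf_sum nf_mult nf_power) auto
    have "\<sigma> (G $ n) = \<sigma> (- (\<Sum>k\<le>n. F $ k * \<xi> ^ k) * u ^ (n + 1))" using Gf by (simp add: u_def)
    also have "\<dots> = - (\<Sum>k\<le>n. \<sigma> (F $ k * \<xi> ^ k)) * inverse \<tau> ^ (n + 1)"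
    proof -
      have s1: "\<sigma> (- (\<Sum>k\<le>n. F $ k * \<xi> ^ k) * u ^ (n + 1)) = \<sigma> (- (\<Sum>k\<le>n. F $ k * \<xi> ^ k)) * \<sigma> (u ^ (n + 1))"
        by (rule emb_mult[OF nf \<sigma> nf_minus[OF nf sumK] nf_power[OF nf uK]])
      have s2: "\<sigma> (- (\<Sum>k\<le>n. F $ k * \<xi> ^ k)) = - \<sigma> (\<Sum>k\<le>n. F $ k * \<xi> ^ k)"
        by (rule emb_minus[OF nf \<sigma> sumK])
      have s3: "\<sigma> (\<Sum>k\<le>n. F $ k * \<xi> ^ k) = (\<Sum>k\<le>n. \<sigma> (F $ k * \<xi> ^ k))"
        by (rule emb_sum[OF nf \<sigma>]) (auto intro: nf_mult[OF nf FK nf_power[OF nf xi(1)]])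
      have s4: "\<sigma> (u ^ (n + 1)) = inverse \<tau> ^ (n + 1)"
        using emb_power[OF nf \<sigma> uK, of "n + 1"] emb_inverse[OF nf \<sigma> xi(1)] by (simp only: u_def \<tau>_def)
      show ?thesis by (simp only: s1 s2 s3 s4)
    qed
    also have "(\<Sum>k\<le>n. \<sigma> (F $ k * \<xi> ^ k)) = (\<Sum>k\<le>n. g k)"
      using emb_mult[OF nf \<sigma> FK nf_power[OF nf xi(1)]] emb_power[OF nf \<sigma> xi(1)]
      by (simp add: g_def \<tau>_def)
    finally have \<sigma>G: "\<sigma> (G $ n) = (\<Sum>j. g (j + Suc n)) * inverse \<tau> ^ (n + 1)" using split by simp
    have \<sigma>b: "\<sigma> (G $ n * fr n) = (\<Sum>j. g (j + Suc n) * (inverse \<tau> ^ (n + 1) * fr n))"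
    proof -
      have "\<sigma> (G $ n * fr n) = \<sigma> (G $ n) * fr n" using emb_mult[OF nf \<sigma> GK frK] \<sigma>fr by simp
      also have "\<dots> = (\<Sum>j. g (j + Suc n)) * (inverse \<tau> ^ (n + 1) * fr n)" unfolding \<sigma>G by (simp only: mult.assoc)
      also have "\<dots> = (\<Sum>j. g (j + Suc n) * (inverse \<tau> ^ (n + 1) * fr n))"
        by (rule suminf_mult2[OF summable_ignore_initial_segment[OF gsum]])
      finally show ?thesis .
    qed
    have hbound: "norm (g (j + Suc n) * (inverse \<tau> ^ (n + 1) * fr n)) \<le> C1 ^ (n + 2) * (X ^ j / fact (j div Q))" for j
    proof -
      define m where "m = j + Suc n"
      have t: "\<tau> ^ m * inverse \<tau> ^ (n + 1) = \<tau> ^ j"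
        using \<tau>0 by (simp add: m_def power_add field_simps)
      have "g m * (inverse \<tau> ^ (n + 1) * fr n) = \<sigma> (a m) * (\<tau> ^ m * inverse \<tau> ^ (n + 1)) * (fr n / fr m)"
        by (simp add: g_def \<sigma>F field_simps)
      also have "\<dots> = \<sigma> (a m) * \<tau> ^ j * (fr n / fr m)" using t by simp
      finally have e: "g m * (inverse \<tau> ^ (n + 1) * fr n) = \<sigma> (a m) * \<tau> ^ j * (fr n / fr m)" .
      have r: "norm (fr n / fr m) \<le> 1 / fact (j div Q)"
        using fact_ratio_le[OF P, of n Q j] by (simp add: norm_divide nfr m_def)
      have "norm (g m * (inverse \<tau> ^ (n + 1) * fr n)) = norm (\<sigma> (a m)) * norm \<tau> ^ j * norm (fr n / fr m)"
        unfolding e by (simp only: norm_mult norm_power)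
      also have "\<dots> \<le> C1 ^ (m + 1) * T ^ j * (1 / fact (j div Q))"
        using ga[of m] \<tau>T r C1 T0 by (intro mult_mono power_mono mult_nonneg_nonneg) auto
      also have "\<dots> = C1 ^ (n + 2) * (X ^ j / fact (j div Q))"
        by (simp add: m_def X_def power_mult_distrib power_add)
      finally show ?thesis by (simp add: m_def)
    qed
    have "norm (\<sigma> (G $ n * fr n)) \<le> (\<Sum>j. C1 ^ (n + 2) * (X ^ j / fact (j div Q)))"
      unfolding \<sigma>b by (rule norm_suminf_le[OF hbound summable_mult[OF Ssum]])
    also have "\<dots> = C1 ^ (n + 2) * S" unfolding S_def by (rule suminf_mult[OF Ssum])
    also have "\<dots> \<le> (C1 ^ 2) ^ (n + 1) * (S + 1) ^ (n + 1)"
    proof (rule mult_mono)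
      have "C1 ^ (n + 2) \<le> C1 ^ (2 * (n + 1))" using C1 by (intro power_increasing) auto
      then show "C1 ^ (n + 2) \<le> (C1 ^ 2) ^ (n + 1)" by (simp only: power_mult)
      have "S + 1 \<le> (S + 1) ^ (n + 1)" using S0 by (intro self_le_power) auto
      then show "S \<le> (S + 1) ^ (n + 1)" by simp
    qed (use C1 S0 in auto)
    also have "\<dots> = (C1 ^ 2 * (S + 1)) ^ (n + 1)" by (simp add: power_mult_distrib)
    also have "\<dots> \<le> C' ^ (n + 1)" using C'1 C1 S0 by (intro power_mono) auto
    finally show ?thesis .
  qed
  have den: "\<exists>d::nat. d > 0 \<and> real d \<le> C' ^ (n + 1) \<and> (\<forall>k\<le>n. algebraic_integer (of_nat d * (G $ k * fr k)))" for n
  proof -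
    obtain d :: nat where d: "d > 0" "real d \<le> C ^ (n + 1)" "\<forall>k\<le>n. algebraic_integer (of_nat d * a k)"
      using Cn[of n] by blast
    define d' where "d' = d * D0 ^ (n + 1)"
    have "d' > 0" using d D0 by (simp add: d'_def)
    moreover have "real d' \<le> C' ^ (n + 1)"
    proof -
      have "real d' = real d * real D0 ^ (n + 1)" by (simp add: d'_def)
      also have "\<dots> \<le> C1 ^ (n + 1) * real D0 ^ (n + 1)"
        using d(2) CC1[of "n+1"] by (intro mult_right_mono) auto
      also have "\<dots> = (C1 * real D0) ^ (n + 1)" by (simp add: power_mult_distrib)
      also have "\<dots> \<le> C' ^ (n + 1)" using C'2 C1 by (intro power_mono) auto
      finally show ?thesis .
    qed
    moreover have "algebraic_integer (of_nat d' * (G $ k * fr k))" if k: "k \<le> n" for k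
    proof -
      define RN where "RN j = (fact (k div Q) div fact (j div Q) :: nat) ^ P" for j
      have RNe: "fr k = of_nat (RN j) * fr j" if j: "j \<le> k" for j
      proof -
        have "fact (j div Q) dvd (fact (k div Q) :: nat)" using j by (intro fact_dvd div_le_mono)
        then have "(fact (k div Q) :: nat) = (fact (k div Q) div fact (j div Q)) * fact (j div Q)" by simp
        then have "(fact (k div Q) :: complex) = of_nat (fact (k div Q) div fact (j div Q)) * fact (j div Q)"
          by (metis of_nat_fact of_nat_mult)
        then show ?thesis by (simp add: fr_def RN_def power_mult_distrib)
      qed
      have termeq: "of_nat d' * (F $ j * \<xi> ^ j * u ^ (k + 1) * fr k)
          = (of_nat d * a j) * of_nat (RN j) * (of_nat D0 ^ (n - k + j) * (of_nat D0 * u) ^ (k + 1 - j))"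
        if j: "j \<le> k" for j
      proof -
        have e1: "F $ j * fr k = a j * of_nat (RN j)" using RNe[OF j] fr0[of j] by (simp add: Fa' field_simps)
        have "u ^ (k + 1) = u ^ j * u ^ (k + 1 - j)" using j by (simp add: power_add[symmetric])
        then have e2: "\<xi> ^ j * u ^ (k + 1) = u ^ (k + 1 - j)"
          using xu by (simp add: mult.assoc[symmetric] power_mult_distrib[symmetric])
        have e3: "(of_nat D0 :: complex) ^ (n + 1) = of_nat D0 ^ (n - k + j) * of_nat D0 ^ (k + 1 - j)"
          using j k by (simp add: power_add[symmetric])
        have "of_nat d' * (F $ j * \<xi> ^ j * u ^ (k + 1) * fr k)
            = of_nat d * of_nat D0 ^ (n + 1) * ((F $ j * fr k) * (\<xi> ^ j * u ^ (k + 1)))"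
          by (simp add: d'_def mult_ac)
        also have "\<dots> = of_nat d * (of_nat D0 ^ (n - k + j) * of_nat D0 ^ (k + 1 - j)) * ((a j * of_nat (RN j)) * u ^ (k + 1 - j))"
          by (simp only: e1 e2 e3)
        also have "\<dots> = (of_nat d * a j) * of_nat (RN j) * (of_nat D0 ^ (n - k + j) * (of_nat D0 * u) ^ (k + 1 - j))"
          by (simp add: power_mult_distrib mult_ac)
        finally show ?thesis .
      qed
      have "of_nat d' * (G $ k * fr k) = - (\<Sum>j\<le>k. of_nat d' * (F $ j * \<xi> ^ j * u ^ (k + 1) * fr k))"
        by (simp add: Gf u_def sum_distrib_left sum_distrib_right mult_ac)
      also have "\<dots> = of_int (-1) * (\<Sum>j\<le>k. (of_nat d * a j) * of_nat (RN j) * (of_nat D0 ^ (n - k + j) * (of_nat D0 * u) ^ (k + 1 - j)))"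
        using termeq by simp
      finally have eq: "of_nat d' * (G $ k * fr k) = of_int (-1) * (\<Sum>j\<le>k. (of_nat d * a j) * of_nat (RN j) * (of_nat D0 ^ (n - k + j) * (of_nat D0 * u) ^ (k + 1 - j)))" .
      show ?thesis unfolding eq
      proof (rule alg_int_mult[OF alg_int_of_int alg_int_sum])
        fix j assume j: "j \<in> {..k}"
        have h1: "algebraic_integer (of_nat d * a j)" using d(3) j k by auto
        have h2: "algebraic_integer (of_nat (RN j))" by (rule alg_int_of_nat)
        have h3: "algebraic_integer (of_nat D0 ^ (n - k + j))" by (rule alg_int_power[OF alg_int_of_nat])
        have h4: "algebraic_integer ((of_nat D0 * u) ^ (k + 1 - j))" by (rule alg_int_power[OF D0(2)])
        show "algebraic_integer ((of_nat d * a j) * of_nat (RN j) * (of_nat D0 ^ (n - k + j) * (of_nat D0 * u) ^ (k + 1 - j)))"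
          by (rule alg_int_mult[OF alg_int_mult[OF h1 h2] alg_int_mult[OF h3 h4]])
      qed simp
    qed
    ultimately show ?thesis by blast
  qed
  have "\<forall>n. (\<forall>\<sigma>. embedding K \<sigma> \<longrightarrow> norm (\<sigma> (G $ n * fact (n div Q) ^ P)) \<le> C' ^ (n + 1)) \<and>
        (\<exists>d::nat. d > 0 \<and> real d \<le> C' ^ (n + 1) \<and> (\<forall>k\<le>n. algebraic_integer (of_nat d * (G $ k * fact (k div Q) ^ P))))"
    using conj den by (simp add: fr_def)
  moreover have "G $ n * fact (n div Q) ^ P \<in> K" for n using GK frK nf_mult[OF nf] by (simp add: fr_def)
  ultimately show ?thesis unfolding condG_def using C'pos by blast
qed


lemma coeff_XG: "((fps_X - fps_const \<xi>) * G) $ n = (if n = 0 then 0 else G $ (n - 1)) - \<xi> * G $ n"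
  for G :: "complex fps"
  by (simp add: left_diff_distrib fps_X_mult_nth fps_mult_left_const_nth)

lemma G_formula:
  fixes F G :: "complex fps"
  assumes xi: "\<xi> \<noteq> 0" and eq: "(fps_X - fps_const \<xi>) * G = F"
  shows "G $ n = - (\<Sum>k\<le>n. F $ k * \<xi> ^ k) * inverse \<xi> ^ (n + 1)"
proof (induction n)
  case 0
  have "F $ 0 = - \<xi> * G $ 0" using coeff_XG[of \<xi> G 0] eq by simp
  then show ?case using xi by (simp add: field_simps)
next
  case (Suc n)
  have "F $ Suc n = G $ n - \<xi> * G $ Suc n" using coeff_XG[of \<xi> G "Suc n"] eq by simp
  then have "G $ Suc n = (G $ n - F $ Suc n) / \<xi>" using xi by (simp add: field_simps)
  also have "\<dots> = (- (\<Sum>k\<le>n. F $ k * \<xi> ^ k) / \<xi> ^ (n + 1) - F $ Suc n) / \<xi>"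
    using Suc by (simp add: power_inverse divide_inverse)
  also have "\<dots> = - (\<Sum>k\<le>Suc n. F $ k * \<xi> ^ k) / \<xi> ^ (Suc n + 1)"
    using xi by (simp add: field_simps)
  finally show ?case by (simp add: power_inverse divide_inverse)
qed

theorem lemma2p1p2:
  fixes K :: "complex set" and \<xi> :: complex and s :: rat and F :: "complex fps"
  assumes "number_field K"
    and "\<xi> \<in> K"
    and "s < 0"
    and "gevrey_arith K s F"
    and "holonomic K F"
    and "\<And>\<sigma>. embedding K \<sigma> \<Longrightarrow> (\<Sum>n. \<sigma> (fps_nth F n) * \<sigma> \<xi> ^ n) = 0"
  shows "(\<exists>G. (\<forall>n. fps_nth G n \<in> K) \<and> (fps_X - fps_const \<xi>) * G = F) \<and>
         (\<forall>G. (fps_X - fps_const \<xi>) * G = F \<longrightarrow> gevrey_arith K s G \<and> holonomic K G)"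
proof -
  note nf = assms(1) and xiK = assms(2) and van = assms(6)
  obtain p q where pq: "quotient_of s = (p, q)" by (cases "quotient_of s") auto
  have q: "q > 0" using pq by (rule quotient_of_denom_pos)
  have sp: "s = of_int p / of_int q" using pq by (rule quotient_of_div)
  have p: "p < 0"
  proof (rule ccontr)
    assume "\<not> p < 0"
    then have "of_int p / of_int q \<ge> (0::rat)" using q by simp
    then show False using sp assms(3) by simp
  qed
  define P where "P = nat (- p)"
  define Q where "Q = nat q"
  have P: "P \<ge> 1" using p by (simp add: P_def)
  have Q: "Q > 0" using q by (simp add: Q_def)
  have powi: "(fact k :: complex) powi p = inverse (fact k ^ P)" for k
    using p by (simp add: power_int_def P_def power_inverse)
  have gev_iff: "gevrey_arith K s H \<longleftrightarrow> (\<exists>b. condG K b \<and> (\<forall>n. H $ n = inverse (fact (n div Q) ^ P) * b n))"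
    for H :: "complex fps"
    unfolding gevrey_arith_def pq by (simp add: powi Q_def)
  obtain a where a: "condG K a" and Fa: "\<And>n. F $ n = inverse (fact (n div Q) ^ P) * a n"
    using assms(4) gev_iff by blast
  have aK: "a n \<in> K" for n using a by (simp add: condG_def)
  have FK: "F $ n \<in> K" for n using Fa[of n] aK nf by (auto intro!: nf_mult nf_inverse nf_power nf_fact)
  have gev_of_condG: "gevrey_arith K s H" if "condG K (\<lambda>n. H $ n * fact (n div Q) ^ P)" for H :: "complex fps"
    unfolding gev_iff using that by (intro exI[of _ "\<lambda>n. H $ n * fact (n div Q) ^ P"]) simp
  show ?thesis
  proof (cases "\<xi> = 0")
    case True
    have "(\<Sum>n. F $ n * (\<lambda>x. x) \<xi> ^ n) = 0" using van[OF embedding_id] by simp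
    moreover have "(\<lambda>n. F $ n * \<xi> ^ n) = (\<lambda>n. if n = 0 then F $ n else 0)" using True by (auto simp: fun_eq_iff)
    ultimately have F0: "F $ 0 = 0" using sums_unique[OF sums_single[of 0 "\<lambda>n. F $ n"]] by simp
    define G0 where "G0 = Abs_fps (\<lambda>n. F $ Suc n)"
    have "(fps_X - fps_const \<xi>) * G0 = F"
      by (rule fps_ext) (auto simp: coeff_XG True G0_def F0)
    moreover have "\<forall>n. G0 $ n \<in> K" using FK by (simp add: G0_def)
    moreover have "gevrey_arith K s G \<and> holonomic K G" if eq: "(fps_X - fps_const \<xi>) * G = F" for G
    proof
      have Gs: "G $ n = F $ Suc n" for n
      proof -
        have "F $ Suc n = G $ n - \<xi> * G $ Suc n" using coeff_XG[of \<xi> G "Suc n"] unfolding eq by simp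
        then show ?thesis using True by simp
      qed
      show "gevrey_arith K s G" by (rule gev_of_condG[OF core_zero[OF nf Q P a Fa Gs]])
      show "holonomic K G" by (rule holonomic_div[OF nf xiK assms(5) eq])
    qed
    ultimately show ?thesis by blast
  next
    case False
    define G0 where "G0 = Abs_fps (\<lambda>n. - (\<Sum>k\<le>n. F $ k * \<xi> ^ k) * inverse \<xi> ^ (n + 1))"
    have "(fps_X - fps_const \<xi>) * G0 = F"
    proof (rule fps_ext)
      fix n
      show "((fps_X - fps_const \<xi>) * G0) $ n = F $ n"
      proof (cases n)
        case 0 then show ?thesis using False by (simp add: coeff_XG G0_def)
      next
        case (Suc m)
        define S where "S = (\<Sum>k\<le>m. F $ k * \<xi> ^ k)"
        define u where "u = inverse \<xi>"
        have xu: "\<xi> * u = 1" using False by (simp add: u_def)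
        have A: "((fps_X - fps_const \<xi>) * G0) $ n = G0 $ m - \<xi> * G0 $ Suc m" by (simp add: coeff_XG Suc)
        have B1: "G0 $ m = - S * u ^ (m + 1)" by (simp add: G0_def S_def u_def)
        have B2: "G0 $ Suc m = - (S + F $ Suc m * \<xi> ^ Suc m) * u ^ (Suc m + 1)"
          by (simp add: G0_def S_def u_def algebra_simps)
        have C: "\<xi> * u ^ (Suc m + 1) = u ^ (m + 1)"
        proof -
          have "\<xi> * u ^ (Suc m + 1) = (\<xi> * u) * u ^ (m + 1)" by (simp add: mult_ac)
          then show ?thesis using xu by simp
        qed
        have Dd: "\<xi> ^ Suc m * u ^ (m + 1) = 1"
        proof -
          have "\<xi> ^ Suc m * u ^ (m + 1) = (\<xi> * u) ^ (m + 1)" by (simp add: power_mult_distrib)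
          then show ?thesis using xu by simp
        qed
        have "G0 $ m - \<xi> * G0 $ Suc m = - S * u ^ (m + 1) + (S + F $ Suc m * \<xi> ^ Suc m) * (\<xi> * u ^ (Suc m + 1))"
          unfolding B1 B2 by (simp add: algebra_simps)
        also have "\<dots> = F $ Suc m * (\<xi> ^ Suc m * u ^ (m + 1))" unfolding C by (simp add: algebra_simps)
        also have "\<dots> = F $ n" using Dd Suc by simp
        finally show ?thesis using A by simp
      qed
    qed
    moreover have "\<forall>n. G0 $ n \<in> K"
      using FK xiK nf by (auto simp: G0_def intro!: nf_mult nf_minus nf_sum nf_power nf_inverse)
    moreover have "gevrey_arith K s G \<and> holonomic K G" if eq: "(fps_X - fps_const \<xi>) * G = F" for G
    proof
      have Gf: "G $ n = - (\<Sum>k\<le>n. F $ k * \<xi> ^ k) * inverse \<xi> ^ (n + 1)" for n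
        by (rule G_formula[OF False eq])
      show "gevrey_arith K s G" by (rule gev_of_condG[OF core_nonzero[OF nf xiK False Q P a Fa van Gf]])
      show "holonomic K G" by (rule holonomic_div[OF nf xiK assms(5) eq])
    qed
    ultimately show ?thesis by blast
  qed
qed

end
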